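(* Let $T=(\mathcal L,\mathcal R)$ be a GT system and $\mathbf D\subseteq\mathcal G(\mathcal L)$. If all non-garbage critical pairs of $T$ with respect to $\mathbf D$ are strongly joinable, then $T$ is locally confluent on $\mathbf D$.
   Context: Fix a label alphabet $\mathcal L=(\mathcal L_V,\mathcal L_E)$ of finite sets. Graphs are totally labelled: $G=(V,E,s,t,l,m)$ with $V,E$ finite, $s,t:E\to V$, $l:V\to\mathcal L_V$, $m:E\to\mathcal L_E$ total; morphisms preserve sources, targets and labels; $\mathcal G(\mathcal L)$ is the set of isomorphism classes. $H$ is a subgraph of $G$ if there is an inclusion morphism $H\hookrightarrow G$. A rule $\langle L\leftarrow K\rightarrow R\rangle$ consists of such graphs with $K$ a subgraph of $L$ and $R$. A direct derivation $G\Rightarrow_{r,g}H$ uses an injective match $g:L\to G$ satisfying the dangling condition (no edge outside $g(L)$ incident to a node in $g(V_L\setminus V_K)$); it deletes $g(L\setminus K)$ giving $D\subseteq G$, then adds $R\setminus K$ disjointly giving $H\supseteq D$, with comatch $h:R\to H$. A GT system $T=(\mathcal L,\mathcal R)$ has a finite rule set. The track morphism of $G\Rightarrow H$ is the partial map $G\rightharpoonup H$ which is the identity (via $D$) on items of $D$ and undefined elsewhere; tracks of derivation sequences are composites. Steps $H_1\Leftarrow_{r_1,g_1}G\Rightarrow_{r_2,g_2}H_2$ are parallelly independent if $g_1(L_1)\cap g_2(L_2)\subseteq g_1(K_1)\cap g_2(K_2)$. Such a pair is a critical pair if $G=g_1(L_1)\cup g_2(L_2)$, the steps are not parallelly independent,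 and $g_1\ne g_2$ when $r_1=r_2$. Its persistent nodes are the nodes $v$ of $G$ for which both tracks $G\Rightarrow H_1$ and $G\Rightarrow H_2$ are defined. It is strongly joinable if there are a graph $M$ and derivations $H_1\Rightarrow^*M\Leftarrow^*H_2$ such that for every persistent node $v$, the tracks of $G\Rightarrow H_1\Rightarrow^*M$ and $G\Rightarrow H_2\Rightarrow^*M$ are both defined at $v$ and equal. A set $\mathbf D\subseteq\mathcal G(\mathcal L)$ is subgraph closed if $[G]\in\mathbf D$ and $H$ a subgraph of $G$ imply $[H]\in\mathbf D$; the subgraph closure $\overline{\mathbf D}$ is the smallest subgraph-closed set containing $\mathbf D$. A critical pair $H_1\Leftarrow G\Rightarrow H_2$ is non-garbage w.r.t. $\mathbf D$ if $[G]\in\overline{\mathbf D}$. Graphs $H_1,H_2$ are joinable if $H_1\Rightarrow^*M\Leftarrow^*H_2$ for some $M$. $T$ is locally confluent on $\mathbf D$ if for all $G$ with $[G]\in\mathbf D$, $H_1\Leftarrow G\Rightarrow H_2$ implies $H_1,H_2$ joinable. *)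

theory Defs
  imports Main
begin

record ('a, 'b) graph =
  nodes :: "nat set"
  edges :: "nat set"
  src   :: "nat \<Rightarrow> nat"
  tgt   :: "nat \<Rightarrow> nat"
  nlab  :: "nat \<Rightarrow> 'a"
  elab  :: "nat \<Rightarrow> 'b"

definition wf_graph :: "('a, 'b) graph \<Rightarrow> bool" where
  "wf_graph G \<longleftrightarrow> finite (nodes G) \<and> finite (edges G) \<and>
     (\<forall>e\<in>edges G. src G e \<in> nodes G \<and> tgt G e \<in> nodes G)"

definition morph :: "('a, 'b) graph \<Rightarrow> ('a, 'b) graph \<Rightarrow> (nat \<Rightarrow> nat) \<Rightarrow> (nat \<Rightarrow> nat) \<Rightarrow> bool" where
  "morph G H fv fe \<longleftrightarrow>
     (\<forall>v\<in>nodes G. fv v \<in> nodes H \<and> nlab H (fv v) = nlab G v) \<and>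
     (\<forall>e\<in>edges G. fe e \<in> edges H \<and> src H (fe e) = fv (src G e) \<and>
                   tgt H (fe e) = fv (tgt G e) \<and> elab H (fe e) = elab G e)"

definition iso :: "('a, 'b) graph \<Rightarrow> ('a, 'b) graph \<Rightarrow> (nat \<Rightarrow> nat) \<Rightarrow> (nat \<Rightarrow> nat) \<Rightarrow> bool" where
  "iso G H fv fe \<longleftrightarrow> morph G H fv fe \<and> bij_betw fv (nodes G) (nodes H) \<and> bij_betw fe (edges G) (edges H)"

definition isomorphic :: "('a, 'b) graph \<Rightarrow> ('a, 'b) graph \<Rightarrow> bool" where
  "isomorphic G H \<longleftrightarrow> (\<exists>fv fe. iso G H fv fe)"

definition subgraph :: "('a, 'b) graph \<Rightarrow> ('a, 'b) graph \<Rightarrow> bool" where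
  "subgraph H G \<longleftrightarrow> morph H G id id"

definition cls :: "('a, 'b) graph \<Rightarrow> ('a, 'b) graph set" where
  "cls G = {H. wf_graph H \<and> isomorphic G H}"

definition graph_classes :: "('a, 'b) graph set set" where
  "graph_classes = {cls G | G. wf_graph G}"

definition subgraph_closed :: "('a, 'b) graph set set \<Rightarrow> bool" where
  "subgraph_closed S \<longleftrightarrow>
     (\<forall>G H. wf_graph G \<longrightarrow> cls G \<in> S \<longrightarrow> wf_graph H \<longrightarrow> subgraph H G \<longrightarrow> cls H \<in> S)"

definition subgraph_closure :: "('a, 'b) graph set set \<Rightarrow> ('a, 'b) graph set set" where
  "subgraph_closure D = \<Inter>{S. S \<subseteq> graph_classes \<and> D \<subseteq> S \<and> subgraph_closed S}"

record ('a, 'b) gt_rule =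
  lhs :: "('a, 'b) graph"
  itf :: "('a, 'b) graph"
  rhs :: "('a, 'b) graph"

definition gt_system :: "('a::finite, 'b::finite) gt_rule set \<Rightarrow> bool" where
  "gt_system Rs \<longleftrightarrow> finite Rs \<and>
     (\<forall>r\<in>Rs. wf_graph (lhs r) \<and> wf_graph (itf r) \<and> wf_graph (rhs r) \<and>
              subgraph (itf r) (lhs r) \<and> subgraph (itf r) (rhs r))"

definition deleted :: "('a, 'b) graph \<Rightarrow> ('a, 'b) gt_rule \<Rightarrow> (nat \<Rightarrow> nat) \<Rightarrow> (nat \<Rightarrow> nat) \<Rightarrow> ('a, 'b) graph" where
  "deleted G r gv ge = G\<lparr>nodes := nodes G - gv ` (nodes (lhs r) - nodes (itf r)),
                          edges := edges G - ge ` (edges (lhs r) - edges (itf r))\<rparr>"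

definition is_match :: "('a, 'b) gt_rule \<Rightarrow> ('a, 'b) graph \<Rightarrow> (nat \<Rightarrow> nat) \<Rightarrow> (nat \<Rightarrow> nat) \<Rightarrow> bool" where
  "is_match r G gv ge \<longleftrightarrow> morph (lhs r) G gv ge \<and>
     inj_on gv (nodes (lhs r)) \<and> inj_on ge (edges (lhs r)) \<and>
     (\<forall>e\<in>edges G - ge ` edges (lhs r).
        src G e \<notin> gv ` (nodes (lhs r) - nodes (itf r)) \<and>
        tgt G e \<notin> gv ` (nodes (lhs r) - nodes (itf r)))"

text \<open>\<open>direct_der Rs G r gv ge H tr\<close>: \<open>G \<Rightarrow>_{r,g} H\<close> with (node) track \<open>tr\<close>.
  \<open>H0\<close> is the result of deleting and then disjointly adding \<open>R - K\<close> (comatch \<open>h\<close>);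
  as usual, \<open>H\<close> is determined up to isomorphism, and the track is the
  identity on the nodes of \<open>D\<close> followed by the isomorphism \<open>H0 \<cong> H\<close>.\<close>
definition direct_der :: "('a, 'b) gt_rule set \<Rightarrow> ('a, 'b) graph \<Rightarrow> ('a, 'b) gt_rule \<Rightarrow>
    (nat \<Rightarrow> nat) \<Rightarrow> (nat \<Rightarrow> nat) \<Rightarrow> ('a, 'b) graph \<Rightarrow> (nat \<Rightarrow> nat option) \<Rightarrow> bool" where
  "direct_der Rs G r gv ge H tr \<longleftrightarrow>
     r \<in> Rs \<and> wf_graph G \<and> wf_graph H \<and> is_match r G gv ge \<and>
     (\<exists>H0 hv he \<phi>v \<phi>e.
        wf_graph H0 \<and> subgraph (deleted G r gv ge) H0 \<and>
        morph (rhs r) H0 hv he \<and> inj_on hv (nodes (rhs r)) \<and> inj_on he (edges (rhs r)) \<and>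
        (\<forall>v\<in>nodes (itf r). hv v = gv v) \<and> (\<forall>e\<in>edges (itf r). he e = ge e) \<and>
        nodes H0 = nodes (deleted G r gv ge) \<union> hv ` (nodes (rhs r) - nodes (itf r)) \<and>
        nodes (deleted G r gv ge) \<inter> hv ` (nodes (rhs r) - nodes (itf r)) = {} \<and>
        edges H0 = edges (deleted G r gv ge) \<union> he ` (edges (rhs r) - edges (itf r)) \<and>
        edges (deleted G r gv ge) \<inter> he ` (edges (rhs r) - edges (itf r)) = {} \<and>
        iso H0 H \<phi>v \<phi>e \<and>
        tr = (\<lambda>v. if v \<in> nodes (deleted G r gv ge) then Some (\<phi>v v) else None))"

inductive ders :: "('a, 'b) gt_rule set \<Rightarrow> ('a, 'b) graph \<Rightarrow> ('a, 'b) graph \<Rightarrow> (nat \<Rightarrow> nat option) \<Rightarrow> bool"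
  for Rs where
  refl: "wf_graph G \<Longrightarrow> iso G H fv fe \<Longrightarrow>
           ders Rs G H (\<lambda>v. if v \<in> nodes G then Some (fv v) else None)"
| step: "direct_der Rs G r gv ge G' t1 \<Longrightarrow> ders Rs G' H t2 \<Longrightarrow> ders Rs G H (t2 \<circ>\<^sub>m t1)"

definition par_indep :: "('a, 'b) gt_rule \<Rightarrow> (nat \<Rightarrow> nat) \<Rightarrow> (nat \<Rightarrow> nat) \<Rightarrow>
    ('a, 'b) gt_rule \<Rightarrow> (nat \<Rightarrow> nat) \<Rightarrow> (nat \<Rightarrow> nat) \<Rightarrow> bool" where
  "par_indep r1 g1v g1e r2 g2v g2e \<longleftrightarrow>
     g1v ` nodes (lhs r1) \<inter> g2v ` nodes (lhs r2) \<subseteq> g1v ` nodes (itf r1) \<inter> g2v ` nodes (itf r2) \<and>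
     g1e ` edges (lhs r1) \<inter> g2e ` edges (lhs r2) \<subseteq> g1e ` edges (itf r1) \<inter> g2e ` edges (itf r2)"

definition critical_pair :: "('a, 'b) gt_rule set \<Rightarrow> ('a, 'b) graph \<Rightarrow>
    ('a, 'b) gt_rule \<Rightarrow> (nat \<Rightarrow> nat) \<Rightarrow> (nat \<Rightarrow> nat) \<Rightarrow> ('a, 'b) graph \<Rightarrow> (nat \<Rightarrow> nat option) \<Rightarrow>
    ('a, 'b) gt_rule \<Rightarrow> (nat \<Rightarrow> nat) \<Rightarrow> (nat \<Rightarrow> nat) \<Rightarrow> ('a, 'b) graph \<Rightarrow> (nat \<Rightarrow> nat option) \<Rightarrow> bool" where
  "critical_pair Rs G r1 g1v g1e H1 t1 r2 g2v g2e H2 t2 \<longleftrightarrow>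
     direct_der Rs G r1 g1v g1e H1 t1 \<and> direct_der Rs G r2 g2v g2e H2 t2 \<and>
     nodes G = g1v ` nodes (lhs r1) \<union> g2v ` nodes (lhs r2) \<and>
     edges G = g1e ` edges (lhs r1) \<union> g2e ` edges (lhs r2) \<and>
     \<not> par_indep r1 g1v g1e r2 g2v g2e \<and>
     (r1 = r2 \<longrightarrow> \<not> ((\<forall>v\<in>nodes (lhs r1). g1v v = g2v v) \<and> (\<forall>e\<in>edges (lhs r1). g1e e = g2e e)))"

definition persistent :: "('a, 'b) graph \<Rightarrow> (nat \<Rightarrow> nat option) \<Rightarrow> (nat \<Rightarrow> nat option) \<Rightarrow> nat set" where
  "persistent G t1 t2 = {v \<in> nodes G. t1 v \<noteq> None \<and> t2 v \<noteq> None}"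

definition strongly_joinable :: "('a, 'b) gt_rule set \<Rightarrow> ('a, 'b) graph \<Rightarrow>
    ('a, 'b) graph \<Rightarrow> (nat \<Rightarrow> nat option) \<Rightarrow> ('a, 'b) graph \<Rightarrow> (nat \<Rightarrow> nat option) \<Rightarrow> bool" where
  "strongly_joinable Rs G H1 t1 H2 t2 \<longleftrightarrow>
     (\<exists>M s1 s2. ders Rs H1 M s1 \<and> ders Rs H2 M s2 \<and>
        (\<forall>v\<in>persistent G t1 t2. (s1 \<circ>\<^sub>m t1) v \<noteq> None \<and> (s1 \<circ>\<^sub>m t1) v = (s2 \<circ>\<^sub>m t2) v))"

definition joinable :: "('a, 'b) gt_rule set \<Rightarrow> ('a, 'b) graph \<Rightarrow> ('a, 'b) graph \<Rightarrow> bool" where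
  "joinable Rs H1 H2 \<longleftrightarrow> (\<exists>M s1 s2. ders Rs H1 M s1 \<and> ders Rs H2 M s2)"

definition locally_confluent_on :: "('a, 'b) gt_rule set \<Rightarrow> ('a, 'b) graph set set \<Rightarrow> bool" where
  "locally_confluent_on Rs D \<longleftrightarrow>
     (\<forall>G. wf_graph G \<longrightarrow> cls G \<in> D \<longrightarrow>
        (\<forall>r1 g1v g1e H1 t1 r2 g2v g2e H2 t2.
           direct_der Rs G r1 g1v g1e H1 t1 \<longrightarrow> direct_der Rs G r2 g2v g2e H2 t2 \<longrightarrow>
           joinable Rs H1 H2))"

end

theory Submission
  imports Defs
begin


lemma morph_comp: "morph A B f1 f2 \<Longrightarrow> morph B C g1 g2 \<Longrightarrow> morph A C (g1 \<circ> f1) (g2 \<circ> f2)"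
  by (auto simp: morph_def)

lemma iso_refl: "iso G G id id"
  by (auto simp: iso_def morph_def)

lemma iso_comp: "iso A B f1 f2 \<Longrightarrow> iso B C g1 g2 \<Longrightarrow> iso A C (g1 \<circ> f1) (g2 \<circ> f2)"
  by (auto simp: iso_def intro: morph_comp bij_betw_trans)

lemma iso_inv:
  assumes "iso A B f g" "wf_graph A"
  shows "iso B A (inv_into (nodes A) f) (inv_into (edges A) g)"
proof -
  have bf: "bij_betw f (nodes A) (nodes B)" and bg: "bij_betw g (edges A) (edges B)"
    and m: "morph A B f g" using assms by (auto simp: iso_def)
  have "morph B A (inv_into (nodes A) f) (inv_into (edges A) g)"
    unfolding morph_def
  proof (intro conjI ballI)
    fix v assume v: "v \<in> nodes B"
    then obtain u where u: "u \<in> nodes A" "v = f u" using bf by (auto simp: bij_betw_def)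
    have i: "inv_into (nodes A) f v = u" using u bf by (simp add: bij_betw_def)
    show "inv_into (nodes A) f v \<in> nodes A" using i u by simp
    show "nlab A (inv_into (nodes A) f v) = nlab B v" using i u m by (auto simp: morph_def)
  next
    fix e assume e: "e \<in> edges B"
    then obtain d where d: "d \<in> edges A" "e = g d" using bg by (auto simp: bij_betw_def)
    have i: "inv_into (edges A) g e = d" using d bg by (simp add: bij_betw_def)
    have s: "src A d \<in> nodes A" "tgt A d \<in> nodes A" using d assms(2) by (auto simp: wf_graph_def)
    have "src B e = f (src A d)" "tgt B e = f (tgt A d)" "elab B e = elab A d"
      using m d by (auto simp: morph_def)
    then show "inv_into (edges A) g e \<in> edges A"
      "src A (inv_into (edges A) g e) = inv_into (nodes A) f (src B e)"
      "tgt A (inv_into (edges A) g e) = inv_into (nodes A) f (tgt B e)"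
      "elab A (inv_into (edges A) g e) = elab B e"
      using i d s bf by (auto simp: bij_betw_def)
  qed
  then show ?thesis using bf bg by (simp add: iso_def bij_betw_inv_into)
qed

lemma iso_wf: "iso A B f g \<Longrightarrow> wf_graph A \<Longrightarrow> wf_graph B"
  unfolding iso_def wf_graph_def morph_def bij_betw_def
  by (metis (no_types, lifting) finite_imageI imageE)

lemma isomorphic_sym: "isomorphic A B \<Longrightarrow> wf_graph A \<Longrightarrow> isomorphic B A"
  unfolding isomorphic_def using iso_inv by blast



definition rule_ok :: "('a, 'b) gt_rule \<Rightarrow> bool" where
  "rule_ok r \<longleftrightarrow> wf_graph (lhs r) \<and> wf_graph (itf r) \<and> wf_graph (rhs r) \<and>
              subgraph (itf r) (lhs r) \<and> subgraph (itf r) (rhs r)"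

lemma gt_system_rule_ok: "gt_system Rs \<Longrightarrow> r \<in> Rs \<Longrightarrow> rule_ok r"
  by (simp add: gt_system_def rule_ok_def)

lemma subgraphD:
  assumes "subgraph H G"
  shows "nodes H \<subseteq> nodes G" "edges H \<subseteq> edges G"
    "\<And>v. v \<in> nodes H \<Longrightarrow> nlab G v = nlab H v"
    "\<And>e. e \<in> edges H \<Longrightarrow> src G e = src H e"
    "\<And>e. e \<in> edges H \<Longrightarrow> tgt G e = tgt H e"
    "\<And>e. e \<in> edges H \<Longrightarrow> elab G e = elab H e"
  using assms by (auto simp: subgraph_def morph_def)

lemma wf_srcD: "wf_graph G \<Longrightarrow> e \<in> edges G \<Longrightarrow> src G e \<in> nodes G"
  and wf_tgtD: "wf_graph G \<Longrightarrow> e \<in> edges G \<Longrightarrow> tgt G e \<in> nodes G"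
  by (auto simp: wf_graph_def)

lemma deleted_simps[simp]:
  "nodes (deleted G r gv ge) = nodes G - gv ` (nodes (lhs r) - nodes (itf r))"
  "edges (deleted G r gv ge) = edges G - ge ` (edges (lhs r) - edges (itf r))"
  "src (deleted G r gv ge) = src G" "tgt (deleted G r gv ge) = tgt G"
  "nlab (deleted G r gv ge) = nlab G" "elab (deleted G r gv ge) = elab G"
  by (simp_all add: deleted_def)

lemma matchD:
  assumes "is_match r G gv ge"
  shows "morph (lhs r) G gv ge" "inj_on gv (nodes (lhs r))" "inj_on ge (edges (lhs r))"
    "\<And>e. e \<in> edges G \<Longrightarrow> e \<notin> ge ` edges (lhs r) \<Longrightarrow> src G e \<notin> gv ` (nodes (lhs r) - nodes (itf r))"
    "\<And>e. e \<in> edges G \<Longrightarrow> e \<notin> ge ` edges (lhs r) \<Longrightarrow> tgt G e \<notin> gv ` (nodes (lhs r) - nodes (itf r))"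
  using assms by (auto simp: is_match_def)

lemma match_nodes: "is_match r G gv ge \<Longrightarrow> v \<in> nodes (lhs r) \<Longrightarrow> gv v \<in> nodes G"
  and match_edges: "is_match r G gv ge \<Longrightarrow> e \<in> edges (lhs r) \<Longrightarrow> ge e \<in> edges G"
  by (auto simp: is_match_def morph_def)

lemma match_itf_nodes:
  assumes "is_match r G gv ge" "rule_ok r" "v \<in> nodes (itf r)"
  shows "gv v \<in> nodes G - gv ` (nodes (lhs r) - nodes (itf r))"
proof -
  have K: "nodes (itf r) \<subseteq> nodes (lhs r)" using assms(2) subgraphD(1) by (auto simp: rule_ok_def)
  have "gv v \<in> nodes G" using assms K match_nodes by blast
  moreover have "gv v \<notin> gv ` (nodes (lhs r) - nodes (itf r))"
  proof
    assume "gv v \<in> gv ` (nodes (lhs r) - nodes (itf r))"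
    then obtain u where "u \<in> nodes (lhs r) - nodes (itf r)" "gv v = gv u" by auto
    then show False using matchD(2)[OF assms(1)] K assms(3) by (metis DiffE inj_onD subsetD)
  qed
  ultimately show ?thesis by simp
qed

lemma match_itf_edges:
  assumes "is_match r G gv ge" "rule_ok r" "e \<in> edges (itf r)"
  shows "ge e \<in> edges G - ge ` (edges (lhs r) - edges (itf r))"
proof -
  have K: "edges (itf r) \<subseteq> edges (lhs r)" using assms(2) subgraphD(2) by (auto simp: rule_ok_def)
  have "ge e \<in> edges G" using assms K match_edges by blast
  moreover have "ge e \<notin> ge ` (edges (lhs r) - edges (itf r))"
  proof
    assume "ge e \<in> ge ` (edges (lhs r) - edges (itf r))"
    then obtain u where "u \<in> edges (lhs r) - edges (itf r)" "ge e = ge u" by auto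
    then show False using matchD(3)[OF assms(1)] K assms(3) by (metis DiffE inj_onD subsetD)
  qed
  ultimately show ?thesis by simp
qed

lemma deleted_endpoints:
  assumes "is_match r G gv ge" "rule_ok r" "wf_graph G"
    and "e \<in> edges G - ge ` (edges (lhs r) - edges (itf r))"
  shows "src G e \<in> nodes G - gv ` (nodes (lhs r) - nodes (itf r))"
    "tgt G e \<in> nodes G - gv ` (nodes (lhs r) - nodes (itf r))"
proof -
  have ok: "wf_graph (lhs r)" "wf_graph (itf r)" "subgraph (itf r) (lhs r)"
    using assms(2) by (auto simp: rule_ok_def)
  have m: "morph (lhs r) G gv ge" using assms(1) by (simp add: is_match_def)
  show "src G e \<in> nodes G - gv ` (nodes (lhs r) - nodes (itf r))"
  proof (cases "e \<in> ge ` edges (lhs r)")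
    case True
    then obtain d where d: "d \<in> edges (lhs r)" "e = ge d" by auto
    then have dK: "d \<in> edges (itf r)" using assms(4) by auto
    have "src G e = gv (src (lhs r) d)" using m d by (simp add: morph_def)
    also have "src (lhs r) d = src (itf r) d" using subgraphD(4)[OF ok(3) dK] .
    finally show ?thesis using match_itf_nodes[OF assms(1,2)] wf_srcD[OF ok(2) dK] by simp
  next
    case False
    then show ?thesis using matchD(4)[OF assms(1)] assms(3,4) wf_srcD by blast
  qed
  show "tgt G e \<in> nodes G - gv ` (nodes (lhs r) - nodes (itf r))"
  proof (cases "e \<in> ge ` edges (lhs r)")
    case True
    then obtain d where d: "d \<in> edges (lhs r)" "e = ge d" by auto
    then have dK: "d \<in> edges (itf r)" using assms(4) by auto
    have "tgt G e = gv (tgt (lhs r) d)" using m d by (simp add: morph_def)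
    also have "tgt (lhs r) d = tgt (itf r) d" using subgraphD(5)[OF ok(3) dK] .
    finally show ?thesis using match_itf_nodes[OF assms(1,2)] wf_tgtD[OF ok(2) dK] by simp
  next
    case False
    then show ?thesis using matchD(5)[OF assms(1)] assms(3,4) wf_tgtD by blast
  qed
qed

lemma wf_deleted:
  assumes "is_match r G gv ge" "rule_ok r" "wf_graph G"
  shows "wf_graph (deleted G r gv ge)"
  using deleted_endpoints[OF assms] assms(3) by (auto simp: wf_graph_def)

lemma subgraph_deleted: "subgraph (deleted G r gv ge) G"
  by (auto simp: subgraph_def morph_def)



lemma finite_bound: "finite (A::nat set) \<Longrightarrow> \<exists>N. \<forall>x\<in>A. x < N"
  by (rule exI[of _ "Suc (Max (insert 0 A))"]) (auto simp: le_imp_less_Suc)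

lemma exists_der:
  assumes "r \<in> Rs" "rule_ok r" "wf_graph G" "is_match r G gv ge"
  shows "\<exists>H tr. direct_der Rs G r gv ge H tr"
proof -
  let ?L = "lhs r" and ?K = "itf r" and ?R = "rhs r"
  have ok: "wf_graph ?L" "wf_graph ?K" "wf_graph ?R" "subgraph ?K ?L" "subgraph ?K ?R"
    using assms(2) by (auto simp: rule_ok_def)
  have m: "morph ?L G gv ge" and ig: "inj_on gv (nodes ?L)" and ie: "inj_on ge (edges ?L)"
    using assms(4) by (auto simp: is_match_def)
  obtain N where N: "\<forall>x\<in>nodes G. x < N" using finite_bound[of "nodes G"] assms(3) by (auto simp: wf_graph_def)
  obtain NE where NE: "\<forall>x\<in>edges G. x < NE" using finite_bound[of "edges G"] assms(3) by (auto simp: wf_graph_def)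
  define D where "D = deleted G r gv ge"
  define hv where "hv = (\<lambda>z. if z \<in> nodes ?K then gv z else z + N)"
  define he where "he = (\<lambda>z. if z \<in> edges ?K then ge z else z + NE)"
  define H0 :: "('a,'b) graph" where "H0 = \<lparr>nodes = nodes D \<union> hv ` (nodes ?R - nodes ?K),
      edges = edges D \<union> he ` (edges ?R - edges ?K),
      src = (\<lambda>e. if e < NE then src G e else hv (src ?R (e - NE))),
      tgt = (\<lambda>e. if e < NE then tgt G e else hv (tgt ?R (e - NE))),
      nlab = (\<lambda>v. if v < N then nlab G v else nlab ?R (v - N)),
      elab = (\<lambda>e. if e < NE then elab G e else elab ?R (e - NE))\<rparr>"
  have KL: "nodes ?K \<subseteq> nodes ?L" "edges ?K \<subseteq> edges ?L" using subgraphD[OF ok(4)] by auto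
  have KR: "nodes ?K \<subseteq> nodes ?R" "edges ?K \<subseteq> edges ?R" using subgraphD[OF ok(5)] by auto
  have wfD: "wf_graph D" unfolding D_def using wf_deleted assms by blast
  have Dsub: "nodes D \<subseteq> nodes G" "edges D \<subseteq> edges G" by (auto simp: D_def)
  have hvK: "z \<in> nodes ?K \<Longrightarrow> hv z \<in> nodes D" for z
    using match_itf_nodes[OF assms(4,2)] by (auto simp: hv_def D_def)
  have heK: "z \<in> edges ?K \<Longrightarrow> he z \<in> edges D" for z
    using match_itf_edges[OF assms(4,2)] by (auto simp: he_def D_def)
  have hvN: "z \<notin> nodes ?K \<Longrightarrow> hv z = z + N" for z by (simp add: hv_def)
  have heN: "z \<notin> edges ?K \<Longrightarrow> he z = z + NE" for z by (simp add: he_def)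
  have dsjV: "nodes D \<inter> hv ` (nodes ?R - nodes ?K) = {}" using N Dsub by (auto simp: hvN)
  have dsjE: "edges D \<inter> he ` (edges ?R - edges ?K) = {}" using NE Dsub by (auto simp: heN)
  have H0src: "e \<in> edges D \<Longrightarrow> src H0 e = src G e" "e \<in> edges D \<Longrightarrow> tgt H0 e = tgt G e"
    "e \<in> edges D \<Longrightarrow> elab H0 e = elab G e" for e using NE Dsub by (auto simp: H0_def)
  have H0nl: "v \<in> nodes D \<Longrightarrow> nlab H0 v = nlab G v" for v using N Dsub by (auto simp: H0_def)
  have H0srcN: "z \<in> edges ?R - edges ?K \<Longrightarrow> src H0 (he z) = hv (src ?R z) \<and>
      tgt H0 (he z) = hv (tgt ?R z) \<and> elab H0 (he z) = elab ?R z" for z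
    by (auto simp: H0_def heN)
  have H0nlN: "z \<in> nodes ?R - nodes ?K \<Longrightarrow> nlab H0 (hv z) = nlab ?R z" for z
    by (auto simp: H0_def hvN)
  have hvR: "z \<in> nodes ?R \<Longrightarrow> hv z \<in> nodes H0" for z using hvK by (auto simp: H0_def)
  have wfH0: "wf_graph H0"
  proof -
    have "finite (nodes H0)" "finite (edges H0)" using wfD ok(3)
      by (auto simp: H0_def wf_graph_def)
    moreover have "src H0 e \<in> nodes H0 \<and> tgt H0 e \<in> nodes H0" if e: "e \<in> edges H0" for e
    proof (cases "e \<in> edges D")
      case True then show ?thesis using H0src wfD by (auto simp: wf_graph_def H0_def D_def)
    next
      case False
      then obtain z where z: "z \<in> edges ?R - edges ?K" "e = he z" using e by (auto simp: H0_def)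
      then show ?thesis using H0srcN[OF z(1)] hvR wf_srcD[OF ok(3)] wf_tgtD[OF ok(3)] by auto
    qed
    ultimately show ?thesis by (auto simp: wf_graph_def)
  qed
  have sub: "subgraph D H0" using H0src H0nl by (auto simp: subgraph_def morph_def H0_def D_def)
  have mRn: "hv z \<in> nodes H0 \<and> nlab H0 (hv z) = nlab ?R z" if z: "z \<in> nodes ?R" for z
  proof (cases "z \<in> nodes ?K")
    case True
    have "nlab H0 (hv z) = nlab G (gv z)" using H0nl hvK True by (simp add: hv_def)
    also have "\<dots> = nlab ?L z" using m True KL by (auto simp: morph_def)
    also have "\<dots> = nlab ?R z" using subgraphD(3)[OF ok(4) True] subgraphD(3)[OF ok(5) True] by simp
    finally show ?thesis using hvR z by simp
  next
    case False then show ?thesis using H0nlN z hvR by simp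
  qed
  have mRe: "he z \<in> edges H0 \<and> src H0 (he z) = hv (src ?R z) \<and> tgt H0 (he z) = hv (tgt ?R z) \<and>
          elab H0 (he z) = elab ?R z" if z: "z \<in> edges ?R" for z
  proof (cases "z \<in> edges ?K")
    case True
    have sK: "src ?R z = src ?L z" "tgt ?R z = tgt ?L z" "elab ?R z = elab ?L z"
      using subgraphD(4-6)[OF ok(4) True] subgraphD(4-6)[OF ok(5) True] by auto
    have sKn: "src ?R z \<in> nodes ?K" "tgt ?R z \<in> nodes ?K"
      using subgraphD(4,5)[OF ok(5) True] wf_srcD[OF ok(2) True] wf_tgtD[OF ok(2) True] by auto
    have "he z \<in> edges D" using heK True .
    moreover have "src G (ge z) = gv (src ?L z)" "tgt G (ge z) = gv (tgt ?L z)"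
      "elab G (ge z) = elab ?L z" using m True KL by (auto simp: morph_def)
    ultimately show ?thesis using H0src sK sKn True by (auto simp: he_def hv_def H0_def)
  next
    case False then show ?thesis using H0srcN z by (auto simp: H0_def)
  qed
  have mR: "morph ?R H0 hv he" using mRn mRe by (simp add: morph_def)
  have ihv: "inj_on hv (nodes ?R)"
  proof (rule inj_onI)
    fix x y assume xy: "x \<in> nodes ?R" "y \<in> nodes ?R" "hv x = hv y"
    show "x = y"
    proof (cases "x \<in> nodes ?K"; cases "y \<in> nodes ?K")
      assume "x \<in> nodes ?K" "y \<in> nodes ?K"
      then show ?thesis using xy ig KL by (auto simp: hv_def inj_on_def)
    next
      assume a: "x \<in> nodes ?K" "y \<notin> nodes ?K"
      then have "hv x \<in> nodes G" using hvK Dsub by auto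
      then show ?thesis using a xy N hvN by fastforce
    next
      assume a: "x \<notin> nodes ?K" "y \<in> nodes ?K"
      then have "hv y \<in> nodes G" using hvK Dsub by auto
      then show ?thesis using a xy N hvN by fastforce
    next
      assume "x \<notin> nodes ?K" "y \<notin> nodes ?K"
      then show ?thesis using xy by (simp add: hvN)
    qed
  qed
  have ihe: "inj_on he (edges ?R)"
  proof (rule inj_onI)
    fix x y assume xy: "x \<in> edges ?R" "y \<in> edges ?R" "he x = he y"
    show "x = y"
    proof (cases "x \<in> edges ?K"; cases "y \<in> edges ?K")
      assume "x \<in> edges ?K" "y \<in> edges ?K"
      then show ?thesis using xy ie KL by (auto simp: he_def inj_on_def)
    next
      assume a: "x \<in> edges ?K" "y \<notin> edges ?K"
      then have "he x \<in> edges G" using heK Dsub by auto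
      then show ?thesis using a xy NE heN by fastforce
    next
      assume a: "x \<notin> edges ?K" "y \<in> edges ?K"
      then have "he y \<in> edges G" using heK Dsub by auto
      then show ?thesis using a xy NE heN by fastforce
    next
      assume "x \<notin> edges ?K" "y \<notin> edges ?K"
      then show ?thesis using xy by (simp add: heN)
    qed
  qed
  have "direct_der Rs G r gv ge H0 (\<lambda>v. if v \<in> nodes (deleted G r gv ge) then Some (id v) else None)"
    unfolding direct_der_def
    apply (intro conjI assms(1,3,4) wfH0)
    apply (rule exI[of _ H0], rule exI[of _ hv], rule exI[of _ he], rule exI[of _ id], rule exI[of _ id])
    using wfH0 sub mR ihv ihe dsjV dsjE iso_refl
    by (auto simp: D_def H0_def hv_def he_def)
  then show ?thesis by blast
qed



definition refok :: "('a,'b) graph \<Rightarrow> ('a,'b) graph \<Rightarrow> nat set \<Rightarrow> bool" where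
  "refok Gc G Bd \<longleftrightarrow> wf_graph Gc \<and> wf_graph G \<and> subgraph Gc G \<and> Bd \<subseteq> nodes Gc \<and>
     (\<forall>e\<in>edges G - edges Gc. (src G e \<in> nodes Gc \<longrightarrow> src G e \<in> Bd) \<and>
                              (tgt G e \<in> nodes Gc \<longrightarrow> tgt G e \<in> Bd))"

definition att :: "('a,'b) graph \<Rightarrow> (nat \<Rightarrow> nat) \<Rightarrow> (nat \<Rightarrow> nat) \<Rightarrow> (nat \<Rightarrow> nat) \<Rightarrow> nat \<Rightarrow> nat" where
  "att Gc kv cv a v = (if v \<in> nodes Gc then kv (a v) else cv v)"

definition ext :: "('a,'b) graph \<Rightarrow> ('a,'b) graph \<Rightarrow> nat set \<Rightarrow> ('a,'b) graph \<Rightarrow> ('a,'b) graph \<Rightarrow>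
   (nat \<Rightarrow> nat) \<Rightarrow> (nat \<Rightarrow> nat) \<Rightarrow> (nat \<Rightarrow> nat) \<Rightarrow> (nat \<Rightarrow> nat) \<Rightarrow> (nat \<Rightarrow> nat) \<Rightarrow> bool" where
  "ext Gc G Bd X X' kv ke cv ce a \<longleftrightarrow> refok Gc G Bd \<and>
     wf_graph X \<and> wf_graph X' \<and> morph X X' kv ke \<and> inj_on kv (nodes X) \<and> inj_on ke (edges X) \<and>
     inj_on cv (nodes G - nodes Gc) \<and> inj_on ce (edges G - edges Gc) \<and>
     nodes X' = kv ` nodes X \<union> cv ` (nodes G - nodes Gc) \<and>
     kv ` nodes X \<inter> cv ` (nodes G - nodes Gc) = {} \<and>
     edges X' = ke ` edges X \<union> ce ` (edges G - edges Gc) \<and>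
     ke ` edges X \<inter> ce ` (edges G - edges Gc) = {} \<and>
     (\<forall>x\<in>nodes G - nodes Gc. nlab X' (cv x) = nlab G x) \<and>
     (\<forall>b\<in>Bd. a b \<in> nodes X) \<and>
     (\<forall>e\<in>edges G - edges Gc. elab X' (ce e) = elab G e \<and>
         src X' (ce e) = att Gc kv cv a (src G e) \<and> tgt X' (ce e) = att Gc kv cv a (tgt G e))"

lemma ext_id:
  assumes "refok Gc G Bd"
  shows "ext Gc G Bd Gc G id id id id id"
proof -
  have s: "subgraph Gc G" "wf_graph Gc" "wf_graph G" "Bd \<subseteq> nodes Gc"
    using assms by (auto simp: refok_def)
  have "\<forall>e\<in>edges G - edges Gc. src G e = att Gc id id id (src G e) \<and> tgt G e = att Gc id id id (tgt G e)"
    by (simp add: att_def)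
  then show ?thesis using assms s subgraphD(1,2)[OF s(1)] unfolding ext_def
    by (simp add: subgraph_def[symmetric] Un_absorb1 subset_eq Int_Diff)
qed

lemma image_o: "(g \<circ> f) ` A = g ` (f ` A)" by auto

lemma inj_on_comp3: "inj_on f A \<Longrightarrow> f ` A \<subseteq> B \<Longrightarrow> inj_on g B \<Longrightarrow> inj_on (g \<circ> f) A"
  by (meson comp_inj_on inj_on_subset)

lemma isoD:
  assumes "iso A B fv fe"
  shows "morph A B fv fe" "bij_betw fv (nodes A) (nodes B)" "bij_betw fe (edges A) (edges B)"
    "inj_on fv (nodes A)" "inj_on fe (edges A)" "fv ` nodes A = nodes B" "fe ` edges A = edges B"
  using assms by (auto simp: iso_def bij_betw_def)


lemma extD:
  assumes "ext Gc G Bd X X' kv ke cv ce a"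
  shows "refok Gc G Bd" "wf_graph X" "wf_graph X'" "morph X X' kv ke" "inj_on kv (nodes X)" "inj_on ke (edges X)"
    "inj_on cv (nodes G - nodes Gc)" "inj_on ce (edges G - edges Gc)"
    "nodes X' = kv ` nodes X \<union> cv ` (nodes G - nodes Gc)"
    "kv ` nodes X \<inter> cv ` (nodes G - nodes Gc) = {}"
    "edges X' = ke ` edges X \<union> ce ` (edges G - edges Gc)"
    "ke ` edges X \<inter> ce ` (edges G - edges Gc) = {}"
    "\<And>x. x \<in> nodes G - nodes Gc \<Longrightarrow> nlab X' (cv x) = nlab G x"
    "\<And>b. b \<in> Bd \<Longrightarrow> a b \<in> nodes X"
    "\<And>e. e \<in> edges G - edges Gc \<Longrightarrow> elab X' (ce e) = elab G e"
    "\<And>e. e \<in> edges G - edges Gc \<Longrightarrow> src X' (ce e) = att Gc kv cv a (src G e)"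
    "\<And>e. e \<in> edges G - edges Gc \<Longrightarrow> tgt X' (ce e) = att Gc kv cv a (tgt G e)"
  using assms unfolding ext_def by auto

lemma refokD:
  assumes "refok Gc G Bd"
  shows "wf_graph Gc" "wf_graph G" "subgraph Gc G" "Bd \<subseteq> nodes Gc"
    "\<And>e. e \<in> edges G - edges Gc \<Longrightarrow> src G e \<in> nodes Gc \<Longrightarrow> src G e \<in> Bd"
    "\<And>e. e \<in> edges G - edges Gc \<Longrightarrow> tgt G e \<in> nodes Gc \<Longrightarrow> tgt G e \<in> Bd"
  using assms unfolding refok_def by auto


lemma ext_transport:
  assumes E: "ext Gc G Bd X X' kv ke cv ce a"
    and I1: "iso X Z fv fe" and I2: "iso X' Z' gv ge"
  shows "ext Gc G Bd Z Z' (gv \<circ> (kv \<circ> inv_into (nodes X) fv)) (ge \<circ> (ke \<circ> inv_into (edges X) fe))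
           (gv \<circ> cv) (ge \<circ> ce) (fv \<circ> a)"
proof -
  let ?CV = "nodes G - nodes Gc" and ?CE = "edges G - edges Gc"
  note e = extD[OF E]
  have I1': "iso Z X (inv_into (nodes X) fv) (inv_into (edges X) fe)" using iso_inv[OF I1 e(2)] .
  note f = isoD[OF I1] and g = isoD[OF I2] and fi = isoD[OF I1']
  have wZ: "wf_graph Z" using iso_wf[OF I1 e(2)] .
  have wZ': "wf_graph Z'" using iso_wf[OF I2 e(3)] .
  have m: "morph Z Z' (gv \<circ> (kv \<circ> inv_into (nodes X) fv)) (ge \<circ> (ke \<circ> inv_into (edges X) fe))"
    by (rule morph_comp[OF morph_comp[OF fi(1) e(4)] g(1)])
  have kX: "kv ` nodes X \<subseteq> nodes X'" "ke ` edges X \<subseteq> edges X'" using e(9,11) by auto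
  have cX: "cv ` ?CV \<subseteq> nodes X'" "ce ` ?CE \<subseteq> edges X'" using e(9,11) by auto
  have i1: "inj_on (gv \<circ> (kv \<circ> inv_into (nodes X) fv)) (nodes Z)"
  proof -
    have a1: "inv_into (nodes X) fv ` nodes Z \<subseteq> nodes X" using fi(6) by simp
    have a2: "(kv \<circ> inv_into (nodes X) fv) ` nodes Z \<subseteq> nodes X'" using fi(6) kX by (simp only: image_o)
    show ?thesis by (rule inj_on_comp3[OF inj_on_comp3[OF fi(4) a1 e(5)] a2 g(4)])
  qed
  have i2: "inj_on (ge \<circ> (ke \<circ> inv_into (edges X) fe)) (edges Z)"
  proof -
    have a1: "inv_into (edges X) fe ` edges Z \<subseteq> edges X" using fi(7) by simp
    have a2: "(ke \<circ> inv_into (edges X) fe) ` edges Z \<subseteq> edges X'" using fi(7) kX by (simp only: image_o)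
    show ?thesis by (rule inj_on_comp3[OF inj_on_comp3[OF fi(5) a1 e(6)] a2 g(5)])
  qed
  have i3: "inj_on (gv \<circ> cv) ?CV" by (rule inj_on_comp3[OF e(7) cX(1) g(4)])
  have i4: "inj_on (ge \<circ> ce) ?CE" by (rule inj_on_comp3[OF e(8) cX(2) g(5)])
  have im1: "(gv \<circ> (kv \<circ> inv_into (nodes X) fv)) ` nodes Z = gv ` (kv ` nodes X)"
    using fi(6) by (simp only: image_o)
  have im2: "(ge \<circ> (ke \<circ> inv_into (edges X) fe)) ` edges Z = ge ` (ke ` edges X)"
    using fi(7) by (simp only: image_o)
  have n1: "nodes Z' = (gv \<circ> (kv \<circ> inv_into (nodes X) fv)) ` nodes Z \<union> (gv \<circ> cv) ` ?CV"
    using g(6) e(9) im1 by (simp only: image_o image_Un)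
  have n2: "edges Z' = (ge \<circ> (ke \<circ> inv_into (edges X) fe)) ` edges Z \<union> (ge \<circ> ce) ` ?CE"
    using g(7) e(11) im2 by (simp only: image_o image_Un)
  have d1: "(gv \<circ> (kv \<circ> inv_into (nodes X) fv)) ` nodes Z \<inter> (gv \<circ> cv) ` ?CV = {}"
    using inj_on_image_Int[OF g(4) kX(1) cX(1)] e(10) im1 by (simp only: image_o image_empty)
  have d2: "(ge \<circ> (ke \<circ> inv_into (edges X) fe)) ` edges Z \<inter> (ge \<circ> ce) ` ?CE = {}"
    using inj_on_image_Int[OF g(5) kX(2) cX(2)] e(12) im2 by (simp only: image_o image_empty)
  have l: "\<forall>x\<in>?CV. nlab Z' ((gv \<circ> cv) x) = nlab G x"
    using e(13) cX g(1) by (auto simp: morph_def)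
  have aB': "\<forall>b\<in>Bd. (fv \<circ> a) b \<in> nodes Z" using e(14) f(6) by auto
  have attEq: "gv (att Gc kv cv a v) = att Gc (gv \<circ> (kv \<circ> inv_into (nodes X) fv)) (gv \<circ> cv) (fv \<circ> a) v"
    if "v \<in> nodes Gc \<longrightarrow> v \<in> Bd" for v
    using that e(14) f(4) by (auto simp: att_def)
  have ctx: "\<forall>ed\<in>?CE. elab Z' ((ge \<circ> ce) ed) = elab G ed \<and>
         src Z' ((ge \<circ> ce) ed) = att Gc (gv \<circ> (kv \<circ> inv_into (nodes X) fv)) (gv \<circ> cv) (fv \<circ> a) (src G ed) \<and>
         tgt Z' ((ge \<circ> ce) ed) = att Gc (gv \<circ> (kv \<circ> inv_into (nodes X) fv)) (gv \<circ> cv) (fv \<circ> a) (tgt G ed)"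
  proof
    fix ed assume ed: "ed \<in> ?CE"
    have c: "ce ed \<in> edges X'" using cX ed by auto
    have "src Z' (ge (ce ed)) = gv (src X' (ce ed))" "tgt Z' (ge (ce ed)) = gv (tgt X' (ce ed))"
      "elab Z' (ge (ce ed)) = elab X' (ce ed)" using g(1) c by (auto simp: morph_def)
    then show "elab Z' ((ge \<circ> ce) ed) = elab G ed \<and>
         src Z' ((ge \<circ> ce) ed) = att Gc (gv \<circ> (kv \<circ> inv_into (nodes X) fv)) (gv \<circ> cv) (fv \<circ> a) (src G ed) \<and>
         tgt Z' ((ge \<circ> ce) ed) = att Gc (gv \<circ> (kv \<circ> inv_into (nodes X) fv)) (gv \<circ> cv) (fv \<circ> a) (tgt G ed)"
      using e(15-17)[OF ed] attEq refokD(5,6)[OF e(1) ed] by simp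
  qed
  show ?thesis unfolding ext_def
    using e(1) wZ wZ' m i1 i2 i3 i4 n1 n2 d1 d2 l aB' ctx by blast
qed



lemma direct_derE:
  assumes "direct_der Rs G r gv ge H tr"
  obtains H0 hv he \<phi>v \<phi>e where
    "r \<in> Rs" "wf_graph G" "wf_graph H" "is_match r G gv ge"
    "wf_graph H0" "subgraph (deleted G r gv ge) H0"
    "morph (rhs r) H0 hv he" "inj_on hv (nodes (rhs r))" "inj_on he (edges (rhs r))"
    "\<forall>v\<in>nodes (itf r). hv v = gv v" "\<forall>e\<in>edges (itf r). he e = ge e"
    "nodes H0 = nodes (deleted G r gv ge) \<union> hv ` (nodes (rhs r) - nodes (itf r))"
    "nodes (deleted G r gv ge) \<inter> hv ` (nodes (rhs r) - nodes (itf r)) = {}"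
    "edges H0 = edges (deleted G r gv ge) \<union> he ` (edges (rhs r) - edges (itf r))"
    "edges (deleted G r gv ge) \<inter> he ` (edges (rhs r) - edges (itf r)) = {}"
    "iso H0 H \<phi>v \<phi>e"
    "tr = (\<lambda>v. if v \<in> nodes (deleted G r gv ge) then Some (\<phi>v v) else None)"
  using assms unfolding direct_der_def by blast

lemma ext_cong_a:
  assumes "ext Gc G Bd X X' kv ke cv ce a" "\<forall>b\<in>Bd. a b = a' b"
  shows "ext Gc G Bd X X' kv ke cv ce a'"
proof -
  have "att Gc kv cv a (src G e) = att Gc kv cv a' (src G e) \<and> att Gc kv cv a (tgt G e) = att Gc kv cv a' (tgt G e)"
    if "e \<in> edges G - edges Gc" for e
    using refokD(5,6)[OF extD(1)[OF assms(1)] that] assms(2) by (auto simp: att_def)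
  then show ?thesis using assms unfolding ext_def by auto
qed

lemma hv_itf:
  assumes "\<forall>v\<in>nodes (itf r). hv v = gv v" "is_match r G gv ge" "rule_ok r" "v \<in> nodes (itf r)"
  shows "hv v \<in> nodes (deleted G r gv ge)"
  using assms match_itf_nodes by fastforce

lemma he_itf:
  assumes "\<forall>e\<in>edges (itf r). he e = ge e" "is_match r G gv ge" "rule_ok r" "e \<in> edges (itf r)"
  shows "he e \<in> edges (deleted G r gv ge)"
  using assms match_itf_edges by fastforce

lemma ext_step:
  assumes E: "ext Gc G Bd X X' kv ke cv ce a"
    and ok: "rule_ok r"
    and D1: "direct_der Rs X r gv ge Y tr"
    and D2: "direct_der Rs X' r gv' ge' Y' tr'"
    and mv: "\<forall>v\<in>nodes (lhs r). gv' v = kv (gv v)" and me: "\<forall>e\<in>edges (lhs r). ge' e = ke (ge e)"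
    and B: "\<forall>b\<in>Bd. tr (a b) \<noteq> None"
  shows "\<exists>kv' ke' cv' ce'. ext Gc G Bd Y Y' kv' ke' cv' ce' (\<lambda>b. the (tr (a b)))"
proof -
  let ?L = "lhs r" and ?K = "itf r" and ?R = "rhs r"
  let ?CV = "nodes G - nodes Gc" and ?CE = "edges G - edges Gc"
  have okr: "wf_graph ?L" "wf_graph ?K" "wf_graph ?R" "subgraph ?K ?L" "subgraph ?K ?R"
    using ok by (auto simp: rule_ok_def)
  have KL: "nodes ?K \<subseteq> nodes ?L" "edges ?K \<subseteq> edges ?L" using subgraphD[OF okr(4)] by auto
  note e = extD[OF E]
  obtain H0 hv he \<phi>v \<phi>e where d1: "r \<in> Rs" "wf_graph X" "wf_graph Y" "is_match r X gv ge"
    "wf_graph H0" "subgraph (deleted X r gv ge) H0"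
    "morph ?R H0 hv he" "inj_on hv (nodes ?R)" "inj_on he (edges ?R)"
    "\<forall>v\<in>nodes ?K. hv v = gv v" "\<forall>e\<in>edges ?K. he e = ge e"
    "nodes H0 = nodes (deleted X r gv ge) \<union> hv ` (nodes ?R - nodes ?K)"
    "nodes (deleted X r gv ge) \<inter> hv ` (nodes ?R - nodes ?K) = {}"
    "edges H0 = edges (deleted X r gv ge) \<union> he ` (edges ?R - edges ?K)"
    "edges (deleted X r gv ge) \<inter> he ` (edges ?R - edges ?K) = {}"
    "iso H0 Y \<phi>v \<phi>e"
    "tr = (\<lambda>v. if v \<in> nodes (deleted X r gv ge) then Some (\<phi>v v) else None)"
    by (rule direct_derE[OF D1])
  obtain H0' hv' he' \<phi>v' \<phi>e' where d2: "r \<in> Rs" "wf_graph X'" "wf_graph Y'" "is_match r X' gv' ge'"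
    "wf_graph H0'" "subgraph (deleted X' r gv' ge') H0'"
    "morph ?R H0' hv' he'" "inj_on hv' (nodes ?R)" "inj_on he' (edges ?R)"
    "\<forall>v\<in>nodes ?K. hv' v = gv' v" "\<forall>e\<in>edges ?K. he' e = ge' e"
    "nodes H0' = nodes (deleted X' r gv' ge') \<union> hv' ` (nodes ?R - nodes ?K)"
    "nodes (deleted X' r gv' ge') \<inter> hv' ` (nodes ?R - nodes ?K) = {}"
    "edges H0' = edges (deleted X' r gv' ge') \<union> he' ` (edges ?R - edges ?K)"
    "edges (deleted X' r gv' ge') \<inter> he' ` (edges ?R - edges ?K) = {}"
    "iso H0' Y' \<phi>v' \<phi>e'"
    "tr' = (\<lambda>v. if v \<in> nodes (deleted X' r gv' ge') then Some (\<phi>v' v) else None)"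
    by (rule direct_derE[OF D2])
  define DX where "DX = deleted X r gv ge"
  define DX' where "DX' = deleted X' r gv' ge'"
  have gL: "gv ` nodes ?L \<subseteq> nodes X" "ge ` edges ?L \<subseteq> edges X"
    using d1(4) match_nodes match_edges by blast+
  have gvimg: "gv' ` (nodes ?L - nodes ?K) = kv ` gv ` (nodes ?L - nodes ?K)" using mv by (auto simp: image_iff)
  have geimg: "ge' ` (edges ?L - edges ?K) = ke ` ge ` (edges ?L - edges ?K)" using me by (auto simp: image_iff)
  have nDX': "nodes DX' = kv ` nodes DX \<union> cv ` ?CV"
  proof -
    have "nodes DX' = (kv ` nodes X \<union> cv ` ?CV) - kv ` gv ` (nodes ?L - nodes ?K)"
      using e(9) gvimg by (simp add: DX'_def)
    also have "\<dots> = kv ` (nodes X - gv ` (nodes ?L - nodes ?K)) \<union> cv ` ?CV"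
    proof -
      have "kv ` nodes X - kv ` gv ` (nodes ?L - nodes ?K) = kv ` (nodes X - gv ` (nodes ?L - nodes ?K))"
        using inj_on_image_set_diff[OF e(5), where A="nodes X" and B="gv ` (nodes ?L - nodes ?K)"] gL by auto
      moreover have "cv ` ?CV \<inter> kv ` gv ` (nodes ?L - nodes ?K) = {}" using e(10) gL by blast
      ultimately show ?thesis by blast
    qed
    finally show ?thesis by (simp add: DX_def)
  qed
  have eDX': "edges DX' = ke ` edges DX \<union> ce ` ?CE"
  proof -
    have "edges DX' = (ke ` edges X \<union> ce ` ?CE) - ke ` ge ` (edges ?L - edges ?K)"
      using e(11) geimg by (simp add: DX'_def)
    also have "\<dots> = ke ` (edges X - ge ` (edges ?L - edges ?K)) \<union> ce ` ?CE"
    proof -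
      have "ke ` edges X - ke ` ge ` (edges ?L - edges ?K) = ke ` (edges X - ge ` (edges ?L - edges ?K))"
        using inj_on_image_set_diff[OF e(6), where A="edges X" and B="ge ` (edges ?L - edges ?K)"] gL by auto
      moreover have "ce ` ?CE \<inter> ke ` ge ` (edges ?L - edges ?K) = {}" using e(12) gL by blast
      ultimately show ?thesis by blast
    qed
    finally show ?thesis by (simp add: DX_def)
  qed
  have DXsub: "nodes DX \<subseteq> nodes X" "edges DX \<subseteq> edges X" by (auto simp: DX_def)
  have aDX: "a b \<in> nodes DX" if "b \<in> Bd" for b using B that d1(17) by (auto simp: DX_def split: if_splits)
  have wDX: "wf_graph DX" unfolding DX_def by (rule wf_deleted[OF d1(4) ok d1(2)])
  have DXg: "src DX = src X" "tgt DX = tgt X" "nlab DX = nlab X" "elab DX = elab X" by (simp_all add: DX_def)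
  have DXg': "src DX' = src X'" "tgt DX' = tgt X'" "nlab DX' = nlab X'" "elab DX' = elab X'" by (simp_all add: DX'_def)
  note s1 = subgraphD[OF d1(6)[folded DX_def]] and s2 = subgraphD[OF d2(6)[folded DX'_def]]
  define kap where "kap = (\<lambda>x. if x \<in> nodes DX then kv x else hv' (inv_into (nodes ?R - nodes ?K) hv x))"
  define kae where "kae = (\<lambda>x. if x \<in> edges DX then ke x else he' (inv_into (edges ?R - edges ?K) he x))"
  have kapD: "x \<in> nodes DX \<Longrightarrow> kap x = kv x" for x by (simp add: kap_def)
  have kaeD: "x \<in> edges DX \<Longrightarrow> kae x = ke x" for x by (simp add: kae_def)
  have kaphv: "kap (hv s) = hv' s" if s: "s \<in> nodes ?R" for s
  proof (cases "s \<in> nodes ?K")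
    case True
    have "hv s = gv s" "hv' s = gv' s" using True d1(10) d2(10) by auto
    moreover have "gv s \<in> nodes DX" using match_itf_nodes[OF d1(4) ok True] by (simp add: DX_def)
    ultimately show ?thesis using mv KL True by (simp add: kap_def subset_eq)
  next
    case False
    then have "hv s \<notin> nodes DX" using d1(13) s by (auto simp: DX_def)
    moreover have "inv_into (nodes ?R - nodes ?K) hv (hv s) = s"
      by (rule inv_into_f_f) (use d1(8) s False in \<open>auto intro: inj_on_subset\<close>)
    ultimately show ?thesis by (simp add: kap_def)
  qed
  have kaehe: "kae (he s) = he' s" if s: "s \<in> edges ?R" for s
  proof (cases "s \<in> edges ?K")
    case True
    have "he s = ge s" "he' s = ge' s" using True d1(11) d2(11) by auto
    moreover have "ge s \<in> edges DX" using match_itf_edges[OF d1(4) ok True] by (simp add: DX_def)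
    ultimately show ?thesis using me KL True by (simp add: kae_def subset_eq)
  next
    case False
    then have "he s \<notin> edges DX" using d1(15) s by (auto simp: DX_def)
    moreover have "inv_into (edges ?R - edges ?K) he (he s) = s"
      by (rule inv_into_f_f) (use d1(9) s False in \<open>auto intro: inj_on_subset\<close>)
    ultimately show ?thesis by (simp add: kae_def)
  qed
  have nH0: "nodes H0 = nodes DX \<union> hv ` (nodes ?R - nodes ?K)" using d1(12) by (simp add: DX_def)
  have eH0: "edges H0 = edges DX \<union> he ` (edges ?R - edges ?K)" using d1(14) by (simp add: DX_def)
  have nH0': "nodes H0' = nodes DX' \<union> hv' ` (nodes ?R - nodes ?K)" using d2(12) by (simp add: DX'_def)
  have eH0': "edges H0' = edges DX' \<union> he' ` (edges ?R - edges ?K)" using d2(14) by (simp add: DX'_def)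
  have dj0: "nodes DX \<inter> hv ` (nodes ?R - nodes ?K) = {}" "edges DX \<inter> he ` (edges ?R - edges ?K) = {}"
    using d1(13,15) by (simp_all add: DX_def)
  have dj0': "nodes DX' \<inter> hv' ` (nodes ?R - nodes ?K) = {}" "edges DX' \<inter> he' ` (edges ?R - edges ?K) = {}"
    using d2(13,15) by (simp_all add: DX'_def)
  have kvX: "x \<in> nodes X \<Longrightarrow> kv x \<in> nodes X' \<and> nlab X' (kv x) = nlab X x" for x
    using e(4) by (auto simp: morph_def)
  have keX: "x \<in> edges X \<Longrightarrow> ke x \<in> edges X' \<and> src X' (ke x) = kv (src X x) \<and>
      tgt X' (ke x) = kv (tgt X x) \<and> elab X' (ke x) = elab X x" for x
    using e(4) by (auto simp: morph_def)
  have mR: "\<And>z. z \<in> nodes ?R \<Longrightarrow> hv z \<in> nodes H0 \<and> nlab H0 (hv z) = nlab ?R z"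
    "\<And>z. z \<in> edges ?R \<Longrightarrow> he z \<in> edges H0 \<and> src H0 (he z) = hv (src ?R z) \<and>
        tgt H0 (he z) = hv (tgt ?R z) \<and> elab H0 (he z) = elab ?R z"
    using d1(7) by (auto simp: morph_def)
  have mR': "\<And>z. z \<in> nodes ?R \<Longrightarrow> hv' z \<in> nodes H0' \<and> nlab H0' (hv' z) = nlab ?R z"
    "\<And>z. z \<in> edges ?R \<Longrightarrow> he' z \<in> edges H0' \<and> src H0' (he' z) = hv' (src ?R z) \<and>
        tgt H0' (he' z) = hv' (tgt ?R z) \<and> elab H0' (he' z) = elab ?R z"
    using d2(7) by (auto simp: morph_def)
  have mn0: "kap x \<in> nodes H0' \<and> nlab H0' (kap x) = nlab H0 x" if x: "x \<in> nodes H0" for x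
    proof (cases "x \<in> nodes DX")
      case True
      then have "kv x \<in> nodes DX'" using nDX' by auto
      then show ?thesis using True kapD s1(3) s2(3) kvX DXsub DXg DXg' nH0' by auto
    next
      case False
      then obtain z where z: "z \<in> nodes ?R - nodes ?K" "x = hv z" using x nH0 by auto
      then show ?thesis using kaphv mR mR' by auto
    qed
  have me0: "kae x \<in> edges H0' \<and> src H0' (kae x) = kap (src H0 x) \<and> tgt H0' (kae x) = kap (tgt H0 x) \<and>
          elab H0' (kae x) = elab H0 x" if x: "x \<in> edges H0" for x
    proof (cases "x \<in> edges DX")
      case True
      then have k: "ke x \<in> edges DX'" using eDX' by auto
      have st: "src X x \<in> nodes DX" "tgt X x \<in> nodes DX" using wDX True DXg by (auto simp: wf_graph_def)
      show ?thesis using True k kaeD kapD[OF st(1)] kapD[OF st(2)] s1(4-6) s2(4-6) keX DXsub DXg DXg' eH0'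
        by auto
    next
      case False
      then obtain z where z: "z \<in> edges ?R - edges ?K" "x = he z" using x eH0 by auto
      have "src ?R z \<in> nodes ?R" "tgt ?R z \<in> nodes ?R" using z okr(3) by (auto simp: wf_graph_def)
      then show ?thesis using z kaehe kaphv mR mR' by auto
    qed
  have morph0: "morph H0 H0' kap kae" using mn0 me0 by (simp add: morph_def)
  have ikap: "inj_on kap (nodes H0)"
  proof (rule inj_onI)
    fix x y assume x: "x \<in> nodes H0" and y: "y \<in> nodes H0" and eq: "kap x = kap y"
    show "x = y"
    proof (cases "x \<in> nodes DX"; cases "y \<in> nodes DX")
      assume "x \<in> nodes DX" "y \<in> nodes DX"
      then show ?thesis using eq kapD e(5) DXsub by (auto dest: inj_onD)
    next
      assume a: "x \<in> nodes DX" "y \<notin> nodes DX"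
      then obtain z where z: "z \<in> nodes ?R - nodes ?K" "y = hv z" using y nH0 by auto
      have "kap x \<in> nodes DX'" using a kapD nDX' by auto
      moreover have "kap y \<in> hv' ` (nodes ?R - nodes ?K)" using z kaphv by auto
      ultimately show ?thesis using eq dj0' by auto
    next
      assume a: "x \<notin> nodes DX" "y \<in> nodes DX"
      then obtain z where z: "z \<in> nodes ?R - nodes ?K" "x = hv z" using x nH0 by auto
      have "kap y \<in> nodes DX'" using a kapD nDX' by auto
      moreover have "kap x \<in> hv' ` (nodes ?R - nodes ?K)" using z kaphv by auto
      ultimately show ?thesis using eq dj0' by auto
    next
      assume a: "x \<notin> nodes DX" "y \<notin> nodes DX"
      then obtain z1 z2 where z: "z1 \<in> nodes ?R - nodes ?K" "x = hv z1" "z2 \<in> nodes ?R - nodes ?K" "y = hv z2"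
        using x y nH0 by auto
      then have "hv' z1 = hv' z2" using eq kaphv by auto
      then have "z1 = z2" using d2(8) z by (auto dest: inj_onD)
      then show ?thesis using z by simp
    qed
  qed
  have ikae: "inj_on kae (edges H0)"
  proof (rule inj_onI)
    fix x y assume x: "x \<in> edges H0" and y: "y \<in> edges H0" and eq: "kae x = kae y"
    show "x = y"
    proof (cases "x \<in> edges DX"; cases "y \<in> edges DX")
      assume "x \<in> edges DX" "y \<in> edges DX"
      then show ?thesis using eq kaeD e(6) DXsub by (auto dest: inj_onD)
    next
      assume a: "x \<in> edges DX" "y \<notin> edges DX"
      then obtain z where z: "z \<in> edges ?R - edges ?K" "y = he z" using y eH0 by auto
      have "kae x \<in> edges DX'" using a kaeD eDX' by auto
      moreover have "kae y \<in> he' ` (edges ?R - edges ?K)" using z kaehe by auto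
      ultimately show ?thesis using eq dj0' by auto
    next
      assume a: "x \<notin> edges DX" "y \<in> edges DX"
      then obtain z where z: "z \<in> edges ?R - edges ?K" "x = he z" using x eH0 by auto
      have "kae y \<in> edges DX'" using a kaeD eDX' by auto
      moreover have "kae x \<in> he' ` (edges ?R - edges ?K)" using z kaehe by auto
      ultimately show ?thesis using eq dj0' by auto
    next
      assume a: "x \<notin> edges DX" "y \<notin> edges DX"
      then obtain z1 z2 where z: "z1 \<in> edges ?R - edges ?K" "x = he z1" "z2 \<in> edges ?R - edges ?K" "y = he z2"
        using x y eH0 by auto
      then have "he' z1 = he' z2" using eq kaehe by auto
      then have "z1 = z2" using d2(9) z by (auto dest: inj_onD)
      then show ?thesis using z by simp
    qed
  qed
  have imgn: "kap ` nodes H0 = kv ` nodes DX \<union> hv' ` (nodes ?R - nodes ?K)"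
  proof -
    have "kap ` nodes DX = kv ` nodes DX" using kapD by auto
    moreover have "kap ` hv ` (nodes ?R - nodes ?K) = hv' ` (nodes ?R - nodes ?K)"
      using kaphv by (force simp: image_iff)
    ultimately show ?thesis using nH0 by (simp add: image_Un)
  qed
  have imge: "kae ` edges H0 = ke ` edges DX \<union> he' ` (edges ?R - edges ?K)"
  proof -
    have "kae ` edges DX = ke ` edges DX" using kaeD by auto
    moreover have "kae ` he ` (edges ?R - edges ?K) = he' ` (edges ?R - edges ?K)"
      using kaehe by (force simp: image_iff)
    ultimately show ?thesis using eH0 by (simp add: image_Un)
  qed
  have N1: "nodes H0' = kap ` nodes H0 \<union> cv ` ?CV" using imgn nH0' nDX' by auto
  have E1: "edges H0' = kae ` edges H0 \<union> ce ` ?CE" using imge eH0' eDX' by auto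
  have N2: "kap ` nodes H0 \<inter> cv ` ?CV = {}"
  proof -
    have "kv ` nodes DX \<inter> cv ` ?CV = {}" using e(10) DXsub(1) by blast
    moreover have "hv' ` (nodes ?R - nodes ?K) \<inter> cv ` ?CV = {}"
    proof -
      have "cv ` ?CV \<subseteq> nodes DX'" using nDX' by simp
      then show ?thesis using dj0'(1) by blast
    qed
    ultimately show ?thesis using imgn by (simp add: Int_Un_distrib2)
  qed
  have E2: "kae ` edges H0 \<inter> ce ` ?CE = {}"
  proof -
    have "ke ` edges DX \<inter> ce ` ?CE = {}" using e(12) DXsub(2) by blast
    moreover have "he' ` (edges ?R - edges ?K) \<inter> ce ` ?CE = {}"
    proof -
      have "ce ` ?CE \<subseteq> edges DX'" using eDX' by simp
      then show ?thesis using dj0'(2) by blast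
    qed
    ultimately show ?thesis using imge by (simp add: Int_Un_distrib2)
  qed
  have lab: "\<forall>x\<in>?CV. nlab H0' (cv x) = nlab G x"
  proof
    fix x assume x: "x \<in> ?CV"
    then have "cv x \<in> nodes DX'" using nDX' by auto
    then show "nlab H0' (cv x) = nlab G x" using s2(3) DXg' e(13)[OF x] by simp
  qed
  have aH0: "\<forall>b\<in>Bd. a b \<in> nodes H0" using aDX nH0 by auto
  have attk: "att Gc kv cv a v = att Gc kap cv a v" if "v \<in> nodes Gc \<longrightarrow> v \<in> Bd" for v
    using that aDX kapD by (auto simp: att_def)
  have ctx: "\<forall>ed\<in>?CE. elab H0' (ce ed) = elab G ed \<and> src H0' (ce ed) = att Gc kap cv a (src G ed) \<and>
      tgt H0' (ce ed) = att Gc kap cv a (tgt G ed)"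
  proof
    fix ed assume ed: "ed \<in> ?CE"
    then have c: "ce ed \<in> edges DX'" using eDX' by auto
    show "elab H0' (ce ed) = elab G ed \<and> src H0' (ce ed) = att Gc kap cv a (src G ed) \<and>
      tgt H0' (ce ed) = att Gc kap cv a (tgt G ed)"
      using s2(4-6)[OF c] DXg' e(15-17)[OF ed] attk refokD(5,6)[OF e(1) ed] by simp
  qed
  have ext0: "ext Gc G Bd H0 H0' kap kae cv ce a"
    unfolding ext_def using e(1) d1(5) d2(5) morph0 ikap ikae e(7,8) N1 N2 E1 E2 lab aH0 ctx by blast
  note ext1 = ext_transport[OF ext0 d1(16) d2(16)]
  have "\<forall>b\<in>Bd. (\<phi>v \<circ> a) b = the (tr (a b))" using aDX d1(17) by (simp add: DX_def)
  from ext_cong_a[OF ext1 this] show ?thesis by blast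
qed



lemma ext_match:
  assumes E: "ext Gc G Bd X X' kv ke cv ce a" and ok: "rule_ok r" and M: "is_match r X gv ge"
    and B: "\<forall>b\<in>Bd. a b \<notin> gv ` (nodes (lhs r) - nodes (itf r))"
  shows "is_match r X' (kv \<circ> gv) (ke \<circ> ge)"
proof -
  let ?L = "lhs r" and ?K = "itf r"
  let ?CV = "nodes G - nodes Gc" and ?CE = "edges G - edges Gc"
  note e = extD[OF E] and m = matchD[OF M]
  have gL: "gv ` nodes ?L \<subseteq> nodes X" "ge ` edges ?L \<subseteq> edges X"
    using M match_nodes match_edges by blast+
  have mo: "morph ?L X' (kv \<circ> gv) (ke \<circ> ge)" by (rule morph_comp[OF m(1) e(4)])
  have i1: "inj_on (kv \<circ> gv) (nodes ?L)" by (rule inj_on_comp3[OF m(2) gL(1) e(5)])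
  have i2: "inj_on (ke \<circ> ge) (edges ?L)" by (rule inj_on_comp3[OF m(3) gL(2) e(6)])
  have notdel: "\<And>y. y \<in> nodes X \<Longrightarrow> y \<notin> gv ` (nodes ?L - nodes ?K) \<Longrightarrow>
      kv y \<notin> (kv \<circ> gv) ` (nodes ?L - nodes ?K)"
  proof
    fix y assume y: "y \<in> nodes X" "y \<notin> gv ` (nodes ?L - nodes ?K)"
      and "kv y \<in> (kv \<circ> gv) ` (nodes ?L - nodes ?K)"
    then obtain l where l: "l \<in> nodes ?L - nodes ?K" "kv y = kv (gv l)" by auto
    then have "y = gv l" using e(5) y(1) gL(1) by (auto dest: inj_onD)
    then show False using y l by auto
  qed
  have cvnot: "\<And>x. x \<in> ?CV \<Longrightarrow> cv x \<notin> (kv \<circ> gv) ` (nodes ?L - nodes ?K)"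
    using e(10) gL(1) by fastforce
  have dang: "src X' ed \<notin> (kv \<circ> gv) ` (nodes ?L - nodes ?K) \<and> tgt X' ed \<notin> (kv \<circ> gv) ` (nodes ?L - nodes ?K)"
    if ed: "ed \<in> edges X' - (ke \<circ> ge) ` edges ?L" for ed
  proof (cases "ed \<in> ke ` edges X")
    case True
    then obtain d where d: "d \<in> edges X" "ed = ke d" by auto
    have "d \<notin> ge ` edges ?L" using ed d by auto
    then have "src X d \<notin> gv ` (nodes ?L - nodes ?K)" "tgt X d \<notin> gv ` (nodes ?L - nodes ?K)"
      using m(4,5) d by auto
    moreover have "src X' ed = kv (src X d)" "tgt X' ed = kv (tgt X d)" using e(4) d by (auto simp: morph_def)
    moreover have "src X d \<in> nodes X" "tgt X d \<in> nodes X" using e(2) d by (auto simp: wf_graph_def)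
    ultimately show ?thesis using notdel by auto
  next
    case False
    then obtain d where d: "d \<in> ?CE" "ed = ce d" using ed e(11) by auto
    have sG: "src G d \<in> nodes G" "tgt G d \<in> nodes G"
      using refokD(2)[OF e(1)] d by (auto simp: wf_graph_def)
    have "att Gc kv cv a v \<notin> (kv \<circ> gv) ` (nodes ?L - nodes ?K)"
      if v: "v \<in> nodes G" "v \<in> nodes Gc \<longrightarrow> v \<in> Bd" for v
    proof (cases "v \<in> nodes Gc")
      case True then show ?thesis using notdel e(14) B v by (auto simp: att_def)
    next
      case False then show ?thesis using cvnot v by (auto simp: att_def)
    qed
    then show ?thesis using e(16,17)[OF d(1)] d(2) sG refokD(5,6)[OF e(1) d(1)] by auto
  qed
  show ?thesis unfolding is_match_def using mo i1 i2 dang by blast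
qed

lemma ders_iso_target:
  assumes "ders Rs X M s" "iso M M' fv fe"
  shows "\<exists>s'. ders Rs X M' s'"
  using assms
proof (induction arbitrary: M' fv fe rule: ders.induct)
  case (refl G H gv ge)
  then show ?case using ders.refl iso_comp by blast
next
  case (step G r gv ge G' t1 H t2)
  then show ?case using ders.step by blast
qed

lemma ext_ders:
  assumes "ders Rs X M s" "gt_system Rs" "ext Gc G Bd X X' kv ke cv ce a" "\<forall>b\<in>Bd. s (a b) \<noteq> None"
  shows "\<exists>M' s' kv' ke' cv' ce'. ders Rs X' M' s' \<and> ext Gc G Bd M M' kv' ke' cv' ce' (\<lambda>b. the (s (a b)))"
  using assms
proof (induction arbitrary: X' kv ke cv ce a rule: ders.induct)
  case (refl X M fv fe)
  note E = ext_transport[OF refl(4) refl(2) iso_refl]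
  have aX: "a b \<in> nodes X" if "b \<in> Bd" for b using extD(14)[OF refl(4) that] .
  have "\<forall>b\<in>Bd. (fv \<circ> a) b = the ((\<lambda>v. if v \<in> nodes X then Some (fv v) else None) (a b))"
    using aX by simp
  note E2 = ext_cong_a[OF E this]
  have "ders Rs X' X' (\<lambda>v. if v \<in> nodes X' then Some (id v) else None)"
    by (rule ders.refl[OF extD(3)[OF refl(4)] iso_refl])
  then show ?case using E2 by blast
next
  case (step X r gv ge G' t1 H t2)
  have ok: "rule_ok r" using step(1) step(4) by (auto elim: direct_derE intro: gt_system_rule_ok)
  obtain H0 hv he \<phi>v \<phi>e where d: "r \<in> Rs" "wf_graph X" "is_match r X gv ge"
    "t1 = (\<lambda>v. if v \<in> nodes (deleted X r gv ge) then Some (\<phi>v v) else None)"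
    using direct_derE[OF step(1)] by metis
  have t1def: "t1 (a b) \<noteq> None" if "b \<in> Bd" for b
    using step(6) that by (auto simp: map_comp_def split: option.splits)
  have notdel: "\<forall>b\<in>Bd. a b \<notin> gv ` (nodes (lhs r) - nodes (itf r))"
    using t1def d(4) by (fastforce split: if_splits)
  have M': "is_match r X' (kv \<circ> gv) (ke \<circ> ge)" by (rule ext_match[OF step(5) ok d(3) notdel])
  obtain Y' tr' where D': "direct_der Rs X' r (kv \<circ> gv) (ke \<circ> ge) Y' tr'"
    using exists_der[OF d(1) ok extD(3)[OF step(5)] M'] by blast
  obtain kv1 ke1 cv1 ce1 where E1: "ext Gc G Bd G' Y' kv1 ke1 cv1 ce1 (\<lambda>b. the (t1 (a b)))"
    using ext_step[OF step(5) ok step(1) D'] t1def by auto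
  have "\<forall>b\<in>Bd. t2 (the (t1 (a b))) \<noteq> None"
    using step(6) t1def by (auto simp: map_comp_def split: option.splits)
  then obtain M' s' kv' ke' cv' ce' where R: "ders Rs Y' M' s'"
    "ext Gc G Bd H M' kv' ke' cv' ce' (\<lambda>b. the (t2 (the (t1 (a b)))))"
    using step.IH[OF step(4) E1] by blast
  have "\<forall>b\<in>Bd. the (t2 (the (t1 (a b)))) = the ((t2 \<circ>\<^sub>m t1) (a b))"
  proof
    fix b assume "b \<in> Bd"
    then obtain y where "t1 (a b) = Some y" using t1def by auto
    then show "the (t2 (the (t1 (a b)))) = the ((t2 \<circ>\<^sub>m t1) (a b))" by simp
  qed
  note E3 = ext_cong_a[OF R(2) this]
  have "ders Rs X' M' (s' \<circ>\<^sub>m tr')" by (rule ders.step[OF D' R(1)])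
  then show ?case using E3 by blast
qed



lemma ext_iso:
  assumes E1: "ext Gc G Bd M M1 k1v k1e c1v c1e a1" and E2: "ext Gc G Bd M M2 k2v k2e c2v c2e a2"
    and A: "\<forall>b\<in>Bd. a1 b = a2 b"
  shows "\<exists>fv fe. iso M1 M2 fv fe"
proof -
  let ?CV = "nodes G - nodes Gc" and ?CE = "edges G - edges Gc"
  note e1 = extD[OF E1] and e2 = extD[OF E2]
  define fv where "fv = (\<lambda>y. if y \<in> k1v ` nodes M then k2v (inv_into (nodes M) k1v y) else c2v (inv_into ?CV c1v y))"
  define fe where "fe = (\<lambda>y. if y \<in> k1e ` edges M then k2e (inv_into (edges M) k1e y) else c2e (inv_into ?CE c1e y))"
  have F1: "fv (k1v x) = k2v x" if "x \<in> nodes M" for x using that e1(5) by (simp add: fv_def)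
  have F2: "fv (c1v x) = c2v x" if "x \<in> ?CV" for x
  proof -
    have "c1v x \<notin> k1v ` nodes M" using e1(10) that by blast
    then show ?thesis using that e1(7) by (simp add: fv_def)
  qed
  have G1: "fe (k1e x) = k2e x" if "x \<in> edges M" for x using that e1(6) by (simp add: fe_def)
  have G2: "fe (c1e x) = c2e x" if "x \<in> ?CE" for x
  proof -
    have "c1e x \<notin> k1e ` edges M" using e1(12) that by blast
    then show ?thesis using that e1(8) by (simp add: fe_def)
  qed
  have wG: "wf_graph G" using refokD(2)[OF e1(1)] .
  have mk1: "\<And>x. x \<in> nodes M \<Longrightarrow> nlab M1 (k1v x) = nlab M x"
    "\<And>x. x \<in> edges M \<Longrightarrow> src M1 (k1e x) = k1v (src M x) \<and> tgt M1 (k1e x) = k1v (tgt M x) \<and> elab M1 (k1e x) = elab M x"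
    using e1(4) by (auto simp: morph_def)
  have mk2: "\<And>x. x \<in> nodes M \<Longrightarrow> nlab M2 (k2v x) = nlab M x"
    "\<And>x. x \<in> edges M \<Longrightarrow> src M2 (k2e x) = k2v (src M x) \<and> tgt M2 (k2e x) = k2v (tgt M x) \<and> elab M2 (k2e x) = elab M x"
    using e2(4) by (auto simp: morph_def)
  have attf: "fv (att Gc k1v c1v a1 v) = att Gc k2v c2v a2 v" if "v \<in> nodes G" "v \<in> nodes Gc \<longrightarrow> v \<in> Bd" for v
    using that F1 F2 e1(14) A by (auto simp: att_def)
  have mn: "fv y \<in> nodes M2 \<and> nlab M2 (fv y) = nlab M1 y" if y: "y \<in> nodes M1" for y
  proof (cases "y \<in> k1v ` nodes M")
    case True
    then obtain x where "x \<in> nodes M" "y = k1v x" by auto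
    then show ?thesis using F1 mk1 mk2 e2(9) by auto
  next
    case False
    then obtain x where "x \<in> ?CV" "y = c1v x" using y e1(9) by auto
    then show ?thesis using F2 e1(13) e2(13) e2(9) by auto
  qed
  have me: "fe y \<in> edges M2 \<and> src M2 (fe y) = fv (src M1 y) \<and> tgt M2 (fe y) = fv (tgt M1 y) \<and>
      elab M2 (fe y) = elab M1 y" if y: "y \<in> edges M1" for y
  proof (cases "y \<in> k1e ` edges M")
    case True
    then obtain x where x: "x \<in> edges M" "y = k1e x" by auto
    have "src M x \<in> nodes M" "tgt M x \<in> nodes M" using e1(2) x by (auto simp: wf_graph_def)
    then show ?thesis using x G1 F1 mk1(2)[OF x(1)] mk2(2)[OF x(1)] e2(11) by auto
  next
    case False
    then obtain x where x: "x \<in> ?CE" "y = c1e x" using y e1(11) by auto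
    have "src G x \<in> nodes G" "tgt G x \<in> nodes G" using wG x by (auto simp: wf_graph_def)
    then show ?thesis using x G2 e1(15-17)[OF x(1)] e2(15-17)[OF x(1)] attf refokD(5,6)[OF e1(1) x(1)] e2(11)
      by auto
  qed
  have mo: "morph M1 M2 fv fe" using mn me by (simp add: morph_def)
  have iv: "inj_on fv (nodes M1)"
  proof (rule inj_onI)
    fix x y assume x: "x \<in> nodes M1" and y: "y \<in> nodes M1" and eq: "fv x = fv y"
    from x e1(9) obtain u where u: "(u \<in> nodes M \<and> x = k1v u) \<or> (u \<in> ?CV \<and> x = c1v u)" by auto
    from y e1(9) obtain w where w: "(w \<in> nodes M \<and> y = k1v w) \<or> (w \<in> ?CV \<and> y = c1v w)" by auto
    have dj: "\<And>u w. u \<in> ?CV \<Longrightarrow> w \<in> nodes M \<Longrightarrow> c2v u \<noteq> k2v w" using e2(10) by blast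
    show "x = y" using u w eq F1 F2 e2(5,7) dj by (auto dest: inj_onD) (metis dj)
  qed
  have ie: "inj_on fe (edges M1)"
  proof (rule inj_onI)
    fix x y assume x: "x \<in> edges M1" and y: "y \<in> edges M1" and eq: "fe x = fe y"
    from x e1(11) obtain u where u: "(u \<in> edges M \<and> x = k1e u) \<or> (u \<in> ?CE \<and> x = c1e u)" by auto
    from y e1(11) obtain w where w: "(w \<in> edges M \<and> y = k1e w) \<or> (w \<in> ?CE \<and> y = c1e w)" by auto
    have dj: "\<And>u w. u \<in> ?CE \<Longrightarrow> w \<in> edges M \<Longrightarrow> c2e u \<noteq> k2e w" using e2(12) by blast
    show "x = y" using u w eq G1 G2 e2(6,8) dj by (auto dest: inj_onD) (metis dj)
  qed
  have sv: "fv ` nodes M1 = nodes M2"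
  proof -
    have "fv ` nodes M1 = fv ` k1v ` nodes M \<union> fv ` c1v ` ?CV" using e1(9) by (simp add: image_Un)
    also have "fv ` k1v ` nodes M = k2v ` nodes M" using F1 by (force simp: image_iff)
    also have "fv ` c1v ` ?CV = c2v ` ?CV" using F2 by (force simp: image_iff)
    finally show ?thesis using e2(9) by simp
  qed
  have se: "fe ` edges M1 = edges M2"
  proof -
    have "fe ` edges M1 = fe ` k1e ` edges M \<union> fe ` c1e ` ?CE" using e1(11) by (simp add: image_Un)
    also have "fe ` k1e ` edges M = k2e ` edges M" using G1 by (force simp: image_iff)
    also have "fe ` c1e ` ?CE = c2e ` ?CE" using G2 by (force simp: image_iff)
    finally show ?thesis using e2(11) by simp
  qed
  have "iso M1 M2 fv fe" using mo iv ie sv se by (simp add: iso_def bij_betw_def)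
  then show ?thesis by blast
qed



lemma ext_empty_iso:
  assumes "ext G G Bd X X' kv ke cv ce a"
  shows "iso X X' kv ke"
  using extD[OF assms] by (simp add: iso_def bij_betw_def)

lemma joinable_iso:
  assumes "iso H1 H2 fv fe" "wf_graph H1" "wf_graph H2"
  shows "joinable Rs H1 H2"
  unfolding joinable_def using ders.refl[OF assms(2,1)] ders.refl[OF assms(3) iso_refl] by blast

lemma same_match_case:
  assumes gt: "gt_system Rs"
    and d1: "direct_der Rs G r g1v g1e H1 t1" and d2: "direct_der Rs G r g2v g2e H2 t2"
    and mv: "\<forall>v\<in>nodes (lhs r). g1v v = g2v v" and me: "\<forall>e\<in>edges (lhs r). g1e e = g2e e"
  shows "joinable Rs H1 H2"
proof -
  have wG: "wf_graph G" and r: "r \<in> Rs" using d1 by (auto elim: direct_derE)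
  have ok: "rule_ok r" using gt r by (rule gt_system_rule_ok)
  have "refok G G {}" using wG by (simp add: refok_def subgraph_def morph_def)
  note E0 = ext_id[OF this]
  obtain kv ke cv ce where E: "ext G G {} H1 H2 kv ke cv ce (\<lambda>b. the (t1 (id b)))"
    using ext_step[OF E0 ok d1 d2] mv me by auto
  show ?thesis using joinable_iso[OF ext_empty_iso[OF E]] extD(2,3)[OF E] by blast
qed

lemma closure_sub:
  assumes "wf_graph G" "cls G \<in> D" "wf_graph Gc" "subgraph Gc G"
  shows "cls Gc \<in> subgraph_closure D"
  using assms unfolding subgraph_closure_def subgraph_closed_def by blast

lemma critical_case:
  assumes gt: "gt_system Rs"
    and hyp: "\<And>G r1 g1v g1e H1 t1 r2 g2v g2e H2 t2.
           critical_pair Rs G r1 g1v g1e H1 t1 r2 g2v g2e H2 t2 \<Longrightarrow>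
           cls G \<in> subgraph_closure D \<Longrightarrow>
           strongly_joinable Rs G H1 t1 H2 t2"
    and GD: "cls G \<in> D"
    and d1: "direct_der Rs G r1 g1v g1e H1 t1" and d2: "direct_der Rs G r2 g2v g2e H2 t2"
    and npi: "\<not> par_indep r1 g1v g1e r2 g2v g2e"
    and neq: "r1 = r2 \<longrightarrow> \<not> ((\<forall>v\<in>nodes (lhs r1). g1v v = g2v v) \<and> (\<forall>e\<in>edges (lhs r1). g1e e = g2e e))"
  shows "joinable Rs H1 H2"
proof -
  obtain H0 hv he \<phi>v \<phi>e where a1: "r1 \<in> Rs" "wf_graph G" "is_match r1 G g1v g1e"
    using direct_derE[OF d1] by metis
  obtain H0 hv he \<phi>v \<phi>e where a2: "r2 \<in> Rs" "is_match r2 G g2v g2e"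
    using direct_derE[OF d2] by metis
  have ok1: "rule_ok r1" and ok2: "rule_ok r2" using gt a1(1) a2(1) gt_system_rule_ok by auto
  define Gc where "Gc = G\<lparr>nodes := g1v ` nodes (lhs r1) \<union> g2v ` nodes (lhs r2),
                          edges := g1e ` edges (lhs r1) \<union> g2e ` edges (lhs r2)\<rparr>"
  have Gcs: "src Gc = src G" "tgt Gc = tgt G" "nlab Gc = nlab G" "elab Gc = elab G"
    "nodes Gc = g1v ` nodes (lhs r1) \<union> g2v ` nodes (lhs r2)"
    "edges Gc = g1e ` edges (lhs r1) \<union> g2e ` edges (lhs r2)" by (simp_all add: Gc_def)
  have m1: "morph (lhs r1) G g1v g1e" and m2: "morph (lhs r2) G g2v g2e"
    using a1(3) a2(2) by (auto simp: is_match_def)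
  have sub: "subgraph Gc G" using m1 m2 by (auto simp: subgraph_def morph_def Gcs)
  have wL1: "wf_graph (lhs r1)" and wL2: "wf_graph (lhs r2)" using ok1 ok2 by (auto simp: rule_ok_def)
  have wGc: "wf_graph Gc"
  proof -
    have "finite (nodes Gc)" "finite (edges Gc)" using wL1 wL2 by (auto simp: wf_graph_def Gcs)
    moreover have "\<forall>e\<in>edges Gc. src Gc e \<in> nodes Gc \<and> tgt Gc e \<in> nodes Gc"
      using m1 m2 wL1 wL2 by (auto simp: morph_def wf_graph_def Gcs)
    ultimately show ?thesis by (simp add: wf_graph_def)
  qed
  have eGc: "edges Gc \<subseteq> edges G" using subgraphD(2)[OF sub] .
  have mo1: "morph (lhs r1) Gc g1v g1e" and mo2: "morph (lhs r2) Gc g2v g2e"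
    using m1 m2 by (auto simp: morph_def Gcs)
  have mGc1: "is_match r1 Gc g1v g1e"
    using a1(3) mo1 eGc unfolding is_match_def Gcs(1,2) by blast
  have mGc2: "is_match r2 Gc g2v g2e"
    using a2(2) mo2 eGc unfolding is_match_def Gcs(1,2) by blast
  obtain H1' t1' where d1': "direct_der Rs Gc r1 g1v g1e H1' t1'"
    using exists_der[OF a1(1) ok1 wGc mGc1] by blast
  obtain H2' t2' where d2': "direct_der Rs Gc r2 g2v g2e H2' t2'"
    using exists_der[OF a2(1) ok2 wGc mGc2] by blast
  have cp: "critical_pair Rs Gc r1 g1v g1e H1' t1' r2 g2v g2e H2' t2'"
    unfolding critical_pair_def using d1' d2' npi neq Gcs(5,6) by blast
  have "cls Gc \<in> subgraph_closure D" using closure_sub[OF a1(2) GD wGc sub] .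
  then obtain M s1 s2 where sj: "ders Rs H1' M s1" "ders Rs H2' M s2"
    "\<forall>v\<in>persistent Gc t1' t2'. (s1 \<circ>\<^sub>m t1') v \<noteq> None \<and> (s1 \<circ>\<^sub>m t1') v = (s2 \<circ>\<^sub>m t2') v"
    using hyp[OF cp] unfolding strongly_joinable_def by blast
  define Bd where "Bd = persistent Gc t1' t2'"
  obtain X1 hx1 hy1 p1 q1 where t1f: "t1' = (\<lambda>v. if v \<in> nodes (deleted Gc r1 g1v g1e) then Some (p1 v) else None)"
    using direct_derE[OF d1'] by metis
  obtain X2 hx2 hy2 p2 q2 where t2f: "t2' = (\<lambda>v. if v \<in> nodes (deleted Gc r2 g2v g2e) then Some (p2 v) else None)"
    using direct_derE[OF d2'] by metis
  have ctxok: "v \<in> Bd" if e: "e \<in> edges G - edges Gc" and v: "v = src G e \<or> v = tgt G e" and vn: "v \<in> nodes Gc" for e v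
  proof -
    have n1: "e \<notin> g1e ` edges (lhs r1)" and n2: "e \<notin> g2e ` edges (lhs r2)" using e Gcs(6) by auto
    have "v \<notin> g1v ` (nodes (lhs r1) - nodes (itf r1))" using matchD(4,5)[OF a1(3) _ n1] e v by (metis DiffD1 imageI)
    moreover have "v \<notin> g2v ` (nodes (lhs r2) - nodes (itf r2))" using matchD(4,5)[OF a2(2) _ n2] e v by (metis DiffD1 imageI)
    ultimately show ?thesis using vn by (simp add: Bd_def persistent_def t1f t2f)
  qed
  have ref: "refok Gc G Bd" unfolding refok_def using wGc a1(2) sub ctxok
    by (auto simp: Bd_def persistent_def)
  note E0 = ext_id[OF ref]
  have B1: "\<forall>b\<in>Bd. t1' (id b) \<noteq> None" and B2: "\<forall>b\<in>Bd. t2' (id b) \<noteq> None"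
    by (auto simp: Bd_def persistent_def)
  obtain k1v k1e c1v c1e where E1: "ext Gc G Bd H1' H1 k1v k1e c1v c1e (\<lambda>b. the (t1' (id b)))"
    using ext_step[OF E0 ok1 d1' d1 _ _ B1] by auto
  obtain k2v k2e c2v c2e where E2: "ext Gc G Bd H2' H2 k2v k2e c2v c2e (\<lambda>b. the (t2' (id b)))"
    using ext_step[OF E0 ok2 d2' d2 _ _ B2] by auto
  have S1: "\<forall>b\<in>Bd. s1 (the (t1' (id b))) \<noteq> None" and S2: "\<forall>b\<in>Bd. s2 (the (t2' (id b))) \<noteq> None"
    and S3: "\<forall>b\<in>Bd. the (s1 (the (t1' (id b)))) = the (s2 (the (t2' (id b))))"
  proof -
    have "s1 (the (t1' b)) \<noteq> None \<and> s2 (the (t2' b)) \<noteq> None \<and> s1 (the (t1' b)) = s2 (the (t2' b))" if b: "b \<in> Bd" for b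
    proof -
      obtain y1 y2 where y: "t1' b = Some y1" "t2' b = Some y2" using b by (auto simp: Bd_def persistent_def)
      have "(s1 \<circ>\<^sub>m t1') b \<noteq> None" "(s1 \<circ>\<^sub>m t1') b = (s2 \<circ>\<^sub>m t2') b" using sj(3) b unfolding Bd_def by blast+
      then show ?thesis using y by simp
    qed
    then show "\<forall>b\<in>Bd. s1 (the (t1' (id b))) \<noteq> None" "\<forall>b\<in>Bd. s2 (the (t2' (id b))) \<noteq> None"
      "\<forall>b\<in>Bd. the (s1 (the (t1' (id b)))) = the (s2 (the (t2' (id b))))" by auto
  qed
  obtain M1 s1' k1v' k1e' c1v' c1e' where R1: "ders Rs H1 M1 s1'"
    "ext Gc G Bd M M1 k1v' k1e' c1v' c1e' (\<lambda>b. the (s1 (the (t1' (id b)))))"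
    using ext_ders[OF sj(1) gt E1 S1] by blast
  obtain M2 s2' k2v' k2e' c2v' c2e' where R2: "ders Rs H2 M2 s2'"
    "ext Gc G Bd M M2 k2v' k2e' c2v' c2e' (\<lambda>b. the (s2 (the (t2' (id b)))))"
    using ext_ders[OF sj(2) gt E2 S2] by blast
  obtain fv fe where "iso M2 M1 fv fe" using ext_iso[OF R2(2) R1(2)] S3 by metis
  then obtain s2'' where "ders Rs H2 M1 s2''" using ders_iso_target[OF R2(1)] by blast
  then show ?thesis using R1(1) by (auto simp: joinable_def)
qed



definition N12 :: "('a,'b) graph \<Rightarrow> ('a,'b) gt_rule \<Rightarrow> (nat \<Rightarrow> nat) \<Rightarrow> ('a,'b) gt_rule \<Rightarrow> (nat \<Rightarrow> nat) \<Rightarrow> nat set" where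
  "N12 G r1 g1v r2 g2v = nodes G - g1v ` (nodes (lhs r1) - nodes (itf r1)) - g2v ` (nodes (lhs r2) - nodes (itf r2))"
definition E12 :: "('a,'b) graph \<Rightarrow> ('a,'b) gt_rule \<Rightarrow> (nat \<Rightarrow> nat) \<Rightarrow> ('a,'b) gt_rule \<Rightarrow> (nat \<Rightarrow> nat) \<Rightarrow> nat set" where
  "E12 G r1 g1e r2 g2e = edges G - g1e ` (edges (lhs r1) - edges (itf r1)) - g2e ` (edges (lhs r2) - edges (itf r2))"

lemma N12_sym: "N12 G r1 g1v r2 g2v = N12 G r2 g2v r1 g1v" by (auto simp: N12_def)
lemma E12_sym: "E12 G r1 g1e r2 g2e = E12 G r2 g2e r1 g1e" by (auto simp: E12_def)

definition desc :: "('a,'b) graph \<Rightarrow> ('a,'b) gt_rule \<Rightarrow> (nat \<Rightarrow> nat) \<Rightarrow> (nat \<Rightarrow> nat) \<Rightarrow>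
    ('a,'b) gt_rule \<Rightarrow> (nat \<Rightarrow> nat) \<Rightarrow> (nat \<Rightarrow> nat) \<Rightarrow> ('a,'b) graph \<Rightarrow>
    (nat \<Rightarrow> nat) \<Rightarrow> (nat \<Rightarrow> nat) \<Rightarrow> (nat \<Rightarrow> nat) \<Rightarrow> (nat \<Rightarrow> nat) \<Rightarrow> (nat \<Rightarrow> nat) \<Rightarrow> (nat \<Rightarrow> nat) \<Rightarrow> bool" where
  "desc G r1 g1v g1e r2 g2v g2e C dl l1 l2 de u1 u2 \<longleftrightarrow>
    (let N = N12 G r1 g1v r2 g2v; E = E12 G r1 g1e r2 g2e;
         V1 = nodes (rhs r1) - nodes (itf r1); V2 = nodes (rhs r2) - nodes (itf r2);
         F1 = edges (rhs r1) - edges (itf r1); F2 = edges (rhs r2) - edges (itf r2) in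
    inj_on dl N \<and> inj_on l1 V1 \<and> inj_on l2 V2 \<and>
    nodes C = dl ` N \<union> l1 ` V1 \<union> l2 ` V2 \<and>
    dl ` N \<inter> l1 ` V1 = {} \<and> dl ` N \<inter> l2 ` V2 = {} \<and> l1 ` V1 \<inter> l2 ` V2 = {} \<and>
    (\<forall>z\<in>nodes (itf r1). l1 z = dl (g1v z)) \<and> (\<forall>z\<in>nodes (itf r2). l2 z = dl (g2v z)) \<and>
    (\<forall>x\<in>N. nlab C (dl x) = nlab G x) \<and> (\<forall>z\<in>V1. nlab C (l1 z) = nlab (rhs r1) z) \<and>
    (\<forall>z\<in>V2. nlab C (l2 z) = nlab (rhs r2) z) \<and>
    inj_on de E \<and> inj_on u1 F1 \<and> inj_on u2 F2 \<and>
    edges C = de ` E \<union> u1 ` F1 \<union> u2 ` F2 \<and>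
    de ` E \<inter> u1 ` F1 = {} \<and> de ` E \<inter> u2 ` F2 = {} \<and> u1 ` F1 \<inter> u2 ` F2 = {} \<and>
    (\<forall>x\<in>E. src C (de x) = dl (src G x) \<and> tgt C (de x) = dl (tgt G x) \<and> elab C (de x) = elab G x) \<and>
    (\<forall>z\<in>F1. src C (u1 z) = l1 (src (rhs r1) z) \<and> tgt C (u1 z) = l1 (tgt (rhs r1) z) \<and> elab C (u1 z) = elab (rhs r1) z) \<and>
    (\<forall>z\<in>F2. src C (u2 z) = l2 (src (rhs r2) z) \<and> tgt C (u2 z) = l2 (tgt (rhs r2) z) \<and> elab C (u2 z) = elab (rhs r2) z))"

lemma desc_sym: "desc G r1 g1v g1e r2 g2v g2e C dl l1 l2 de u1 u2 \<Longrightarrow> desc G r2 g2v g2e r1 g1v g1e C dl l2 l1 de u2 u1"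
  unfolding desc_def Let_def N12_sym[of G r1] E12_sym[of G r1] by (auto simp: Un_ac Int_commute)

definition side :: "('a,'b) graph \<Rightarrow> ('a,'b) gt_rule \<Rightarrow> (nat \<Rightarrow> nat) \<Rightarrow> (nat \<Rightarrow> nat) \<Rightarrow>
    ('a,'b) gt_rule \<Rightarrow> (nat \<Rightarrow> nat) \<Rightarrow> (nat \<Rightarrow> nat) \<Rightarrow> bool" where
  "side G r1 g1v g1e r2 g2v g2e \<longleftrightarrow> g1v ` nodes (itf r1) \<subseteq> N12 G r1 g1v r2 g2v \<and>
     g2v ` nodes (itf r2) \<subseteq> N12 G r1 g1v r2 g2v \<and>
     (\<forall>x\<in>E12 G r1 g1e r2 g2e. src G x \<in> N12 G r1 g1v r2 g2v \<and> tgt G x \<in> N12 G r1 g1v r2 g2v) \<and>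
     rule_ok r1 \<and> rule_ok r2"

lemma descD:
  assumes "desc G r1 g1v g1e r2 g2v g2e C dl l1 l2 de u1 u2"
  defines "N \<equiv> N12 G r1 g1v r2 g2v" and "E \<equiv> E12 G r1 g1e r2 g2e"
    and "V1 \<equiv> nodes (rhs r1) - nodes (itf r1)" and "V2 \<equiv> nodes (rhs r2) - nodes (itf r2)"
    and "F1 \<equiv> edges (rhs r1) - edges (itf r1)" and "F2 \<equiv> edges (rhs r2) - edges (itf r2)"
  shows "inj_on dl N" "inj_on l1 V1" "inj_on l2 V2"
    "nodes C = dl ` N \<union> l1 ` V1 \<union> l2 ` V2"
    "dl ` N \<inter> l1 ` V1 = {}" "dl ` N \<inter> l2 ` V2 = {}" "l1 ` V1 \<inter> l2 ` V2 = {}"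
    "\<And>z. z\<in>nodes (itf r1) \<Longrightarrow> l1 z = dl (g1v z)" "\<And>z. z\<in>nodes (itf r2) \<Longrightarrow> l2 z = dl (g2v z)"
    "\<And>x. x\<in>N \<Longrightarrow> nlab C (dl x) = nlab G x" "\<And>z. z\<in>V1 \<Longrightarrow> nlab C (l1 z) = nlab (rhs r1) z"
    "\<And>z. z\<in>V2 \<Longrightarrow> nlab C (l2 z) = nlab (rhs r2) z"
    "inj_on de E" "inj_on u1 F1" "inj_on u2 F2"
    "edges C = de ` E \<union> u1 ` F1 \<union> u2 ` F2"
    "de ` E \<inter> u1 ` F1 = {}" "de ` E \<inter> u2 ` F2 = {}" "u1 ` F1 \<inter> u2 ` F2 = {}"
    "\<And>x. x\<in>E \<Longrightarrow> src C (de x) = dl (src G x) \<and> tgt C (de x) = dl (tgt G x) \<and> elab C (de x) = elab G x"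
    "\<And>z. z\<in>F1 \<Longrightarrow> src C (u1 z) = l1 (src (rhs r1) z) \<and> tgt C (u1 z) = l1 (tgt (rhs r1) z) \<and> elab C (u1 z) = elab (rhs r1) z"
    "\<And>z. z\<in>F2 \<Longrightarrow> src C (u2 z) = l2 (src (rhs r2) z) \<and> tgt C (u2 z) = l2 (tgt (rhs r2) z) \<and> elab C (u2 z) = elab (rhs r2) z"
  using assms(1) unfolding desc_def Let_def N_def E_def V1_def V2_def F1_def F2_def by auto

lemma three_inj:
  assumes "x \<in> dl`N \<union> l1`V1 \<union> l2`V2" "y \<in> dl`N \<union> l1`V1 \<union> l2`V2" "f x = f y"
    and "\<forall>a\<in>N. f (dl a) = dl' a" "\<forall>a\<in>V1. f (l1 a) = l1' a" "\<forall>a\<in>V2. f (l2 a) = l2' a"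
    and "inj_on dl' N" "inj_on l1' V1" "inj_on l2' V2"
    and "dl'`N \<inter> l1'`V1 = {}" "dl'`N \<inter> l2'`V2 = {}" "l1'`V1 \<inter> l2'`V2 = {}"
  shows "x = y"
proof -
  have dj: "\<And>a b. a \<in> N \<Longrightarrow> b \<in> V1 \<Longrightarrow> dl' a \<noteq> l1' b" "\<And>a b. a \<in> N \<Longrightarrow> b \<in> V2 \<Longrightarrow> dl' a \<noteq> l2' b"
      "\<And>a b. a \<in> V1 \<Longrightarrow> b \<in> V2 \<Longrightarrow> l1' a \<noteq> l2' b" using assms(10-12) by blast+
  from assms(1) consider (a) a where "a \<in> N" "x = dl a" | (b) a where "a \<in> V1" "x = l1 a"
      | (c) a where "a \<in> V2" "x = l2 a" by blast
  moreover from assms(2) consider (a) b where "b \<in> N" "y = dl b" | (b) b where "b \<in> V1" "y = l1 b"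
      | (c) b where "b \<in> V2" "y = l2 b" by blast
  ultimately show ?thesis using assms(3-9) dj by (smt (verit) inj_onD)
qed

lemma desc_iso:
  assumes D: "desc G r1 g1v g1e r2 g2v g2e C dl l1 l2 de u1 u2"
    and D': "desc G r1 g1v g1e r2 g2v g2e C' dl' l1' l2' de' u1' u2'"
    and S: "side G r1 g1v g1e r2 g2v g2e"
  shows "\<exists>fv fe. iso C C' fv fe"
proof -
  define N where "N = N12 G r1 g1v r2 g2v"
  define E where "E = E12 G r1 g1e r2 g2e"
  define V1 where "V1 = nodes (rhs r1) - nodes (itf r1)"
  define V2 where "V2 = nodes (rhs r2) - nodes (itf r2)"
  define F1 where "F1 = edges (rhs r1) - edges (itf r1)"
  define F2 where "F2 = edges (rhs r2) - edges (itf r2)"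
  note d = descD[OF D, folded N_def E_def V1_def V2_def F1_def F2_def]
  note d' = descD[OF D', folded N_def E_def V1_def V2_def F1_def F2_def]
  have s: "g1v ` nodes (itf r1) \<subseteq> N" "g2v ` nodes (itf r2) \<subseteq> N"
    "\<And>x. x\<in>E \<Longrightarrow> src G x \<in> N \<and> tgt G x \<in> N" "rule_ok r1" "rule_ok r2"
    using S unfolding side_def N_def E_def by auto
  have wR: "wf_graph (rhs r1)" "wf_graph (rhs r2)" using s(4,5) by (auto simp: rule_ok_def)
  define f where "f = (\<lambda>y. if y \<in> dl ` N then dl' (inv_into N dl y)
                           else if y \<in> l1 ` V1 then l1' (inv_into V1 l1 y) else l2' (inv_into V2 l2 y))"
  define g where "g = (\<lambda>y. if y \<in> de ` E then de' (inv_into E de y)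
                           else if y \<in> u1 ` F1 then u1' (inv_into F1 u1 y) else u2' (inv_into F2 u2 y))"
  have fd: "f (dl x) = dl' x" if "x \<in> N" for x using that d(1) by (simp add: f_def)
  have f1: "f (l1 z) = l1' z" if "z \<in> V1" for z
  proof -
    have "l1 z \<notin> dl ` N" using d(5) that by blast
    then show ?thesis using that d(2) by (simp add: f_def)
  qed
  have f2: "f (l2 z) = l2' z" if "z \<in> V2" for z
  proof -
    have "l2 z \<notin> dl ` N" "l2 z \<notin> l1 ` V1" using d(6,7) that by blast+
    then show ?thesis using that d(3) by (simp add: f_def)
  qed
  have f1R: "f (l1 z) = l1' z" if "z \<in> nodes (rhs r1)" for z
  proof (cases "z \<in> nodes (itf r1)")
    case True then show ?thesis using d(8) d'(8) fd s(1) by auto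
  next
    case False then show ?thesis using f1 that by (simp add: V1_def)
  qed
  have f2R: "f (l2 z) = l2' z" if "z \<in> nodes (rhs r2)" for z
  proof (cases "z \<in> nodes (itf r2)")
    case True then show ?thesis using d(9) d'(9) fd s(2) by auto
  next
    case False then show ?thesis using f2 that by (simp add: V2_def)
  qed
  have gd: "g (de x) = de' x" if "x \<in> E" for x using that d(13) by (simp add: g_def)
  have g1: "g (u1 z) = u1' z" if "z \<in> F1" for z
  proof -
    have "u1 z \<notin> de ` E" using d(17) that by blast
    then show ?thesis using that d(14) by (simp add: g_def)
  qed
  have g2: "g (u2 z) = u2' z" if "z \<in> F2" for z
  proof -
    have "u2 z \<notin> de ` E" "u2 z \<notin> u1 ` F1" using d(18,19) that by blast+
    then show ?thesis using that d(15) by (simp add: g_def)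
  qed
  have mn: "f y \<in> nodes C' \<and> nlab C' (f y) = nlab C y" if y: "y \<in> nodes C" for y
  proof -
    from y d(4) consider (a) x where "x \<in> N" "y = dl x" | (b) z where "z \<in> V1" "y = l1 z"
      | (c) z where "z \<in> V2" "y = l2 z" by blast
    then show ?thesis
    proof cases
      case a then show ?thesis using fd d(10) d'(10) d'(4) by auto
    next
      case b then show ?thesis using f1 d(11) d'(11) d'(4) by auto
    next
      case c then show ?thesis using f2 d(12) d'(12) d'(4) by auto
    qed
  qed
  have me: "g y \<in> edges C' \<and> src C' (g y) = f (src C y) \<and> tgt C' (g y) = f (tgt C y) \<and> elab C' (g y) = elab C y"
    if y: "y \<in> edges C" for y
  proof -
    from y d(16) consider (a) x where "x \<in> E" "y = de x" | (b) z where "z \<in> F1" "y = u1 z"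
      | (c) z where "z \<in> F2" "y = u2 z" by blast
    then show ?thesis
    proof cases
      case a then show ?thesis using gd d(20) d'(20) d'(16) fd s(3) by auto
    next
      case b
      then have "src (rhs r1) z \<in> nodes (rhs r1)" "tgt (rhs r1) z \<in> nodes (rhs r1)"
        using wR(1) by (auto simp: wf_graph_def F1_def)
      then show ?thesis using b g1 d(21) d'(21) d'(16) f1R by auto
    next
      case c
      then have "src (rhs r2) z \<in> nodes (rhs r2)" "tgt (rhs r2) z \<in> nodes (rhs r2)"
        using wR(2) by (auto simp: wf_graph_def F2_def)
      then show ?thesis using c g2 d(22) d'(22) d'(16) f2R by auto
    qed
  qed
  have mo: "morph C C' f g" using mn me by (simp add: morph_def)
  have iv: "inj_on f (nodes C)"
    by (rule inj_onI, rule three_inj[of _ dl N l1 V1 l2 V2 _ f dl' l1' l2'])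
      (use d(4) fd f1 f2 d'(1-3,5-7) in auto)
  have ie: "inj_on g (edges C)"
    by (rule inj_onI, rule three_inj[of _ de E u1 F1 u2 F2 _ g de' u1' u2'])
      (use d(16) gd g1 g2 d'(13-15,17-19) in auto)
  have sv: "f ` nodes C = nodes C'"
  proof -
    have "f ` nodes C = f ` dl ` N \<union> f ` l1 ` V1 \<union> f ` l2 ` V2" using d(4) by (simp add: image_Un)
    also have "f ` dl ` N = dl' ` N" using fd by (force simp: image_iff)
    also have "f ` l1 ` V1 = l1' ` V1" using f1 by (force simp: image_iff)
    also have "f ` l2 ` V2 = l2' ` V2" using f2 by (force simp: image_iff)
    finally show ?thesis using d'(4) by simp
  qed
  have se: "g ` edges C = edges C'"
  proof -
    have "g ` edges C = g ` de ` E \<union> g ` u1 ` F1 \<union> g ` u2 ` F2" using d(16) by (simp add: image_Un)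
    also have "g ` de ` E = de' ` E" using gd by (force simp: image_iff)
    also have "g ` u1 ` F1 = u1' ` F1" using g1 by (force simp: image_iff)
    also have "g ` u2 ` F2 = u2' ` F2" using g2 by (force simp: image_iff)
    finally show ?thesis using d'(16) by simp
  qed
  have "iso C C' f g" using mo iv ie sv se by (simp add: iso_def bij_betw_def)
  then show ?thesis by blast
qed



lemma par_indep_sym: "par_indep r1 g1v g1e r2 g2v g2e \<longleftrightarrow> par_indep r2 g2v g2e r1 g1v g1e"
  unfolding par_indep_def by blast

lemma pi_nodes:
  assumes PI: "par_indep r1 g1v g1e r2 g2v g2e" and M1: "is_match r1 G g1v g1e" and M2: "is_match r2 G g2v g2e"
    and ok1: "rule_ok r1" and ok2: "rule_ok r2"
  shows "g2v ` nodes (lhs r2) \<subseteq> nodes G - g1v ` (nodes (lhs r1) - nodes (itf r1))"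
    "g2e ` edges (lhs r2) \<subseteq> edges G - g1e ` (edges (lhs r1) - edges (itf r1))"
proof -
  have sK: "subgraph (itf r1) (lhs r1)" using ok1 by (simp add: rule_ok_def)
  have KL: "nodes (itf r1) \<subseteq> nodes (lhs r1)" "edges (itf r1) \<subseteq> edges (lhs r1)"
    using subgraphD(1,2)[OF sK] by auto
  show "g2v ` nodes (lhs r2) \<subseteq> nodes G - g1v ` (nodes (lhs r1) - nodes (itf r1))"
  proof
    fix x assume x: "x \<in> g2v ` nodes (lhs r2)"
    have "x \<in> nodes G" using x M2 match_nodes by blast
    moreover have "x \<notin> g1v ` (nodes (lhs r1) - nodes (itf r1))"
    proof
      assume "x \<in> g1v ` (nodes (lhs r1) - nodes (itf r1))"
      then obtain m where m: "m \<in> nodes (lhs r1) - nodes (itf r1)" "x = g1v m" by auto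
      then have "x \<in> g1v ` nodes (itf r1)" using PI x unfolding par_indep_def by blast
      then obtain k where k: "k \<in> nodes (itf r1)" "x = g1v k" by auto
      then have "m = k" using m matchD(2)[OF M1] KL by (auto dest: inj_onD)
      then show False using m k by simp
    qed
    ultimately show "x \<in> nodes G - g1v ` (nodes (lhs r1) - nodes (itf r1))" by simp
  qed
  show "g2e ` edges (lhs r2) \<subseteq> edges G - g1e ` (edges (lhs r1) - edges (itf r1))"
  proof
    fix x assume x: "x \<in> g2e ` edges (lhs r2)"
    have "x \<in> edges G" using x M2 match_edges by blast
    moreover have "x \<notin> g1e ` (edges (lhs r1) - edges (itf r1))"
    proof
      assume "x \<in> g1e ` (edges (lhs r1) - edges (itf r1))"
      then obtain m where m: "m \<in> edges (lhs r1) - edges (itf r1)" "x = g1e m" by auto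
      then have "x \<in> g1e ` edges (itf r1)" using PI x unfolding par_indep_def by blast
      then obtain k where k: "k \<in> edges (itf r1)" "x = g1e k" by auto
      then have "m = k" using m matchD(3)[OF M1] KL by (auto dest: inj_onD)
      then show False using m k by simp
    qed
    ultimately show "x \<in> edges G - g1e ` (edges (lhs r1) - edges (itf r1))" by simp
  qed
qed

lemma pi_side:
  assumes PI: "par_indep r1 g1v g1e r2 g2v g2e" and M1: "is_match r1 G g1v g1e" and M2: "is_match r2 G g2v g2e"
    and ok1: "rule_ok r1" and ok2: "rule_ok r2" and wG: "wf_graph G"
  shows "side G r1 g1v g1e r2 g2v g2e"
proof -
  note p1 = pi_nodes[OF PI M1 M2 ok1 ok2]
  note p2 = pi_nodes[OF PI[THEN par_indep_sym[THEN iffD1]] M2 M1 ok2 ok1]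
  have sK1: "subgraph (itf r1) (lhs r1)" using ok1 by (simp add: rule_ok_def)
  have sK2: "subgraph (itf r2) (lhs r2)" using ok2 by (simp add: rule_ok_def)
  have KL1: "nodes (itf r1) \<subseteq> nodes (lhs r1)" using subgraphD(1)[OF sK1] .
  have KL2: "nodes (itf r2) \<subseteq> nodes (lhs r2)" using subgraphD(1)[OF sK2] .
  have a: "g1v ` nodes (itf r1) \<subseteq> N12 G r1 g1v r2 g2v"
  proof
    fix x assume "x \<in> g1v ` nodes (itf r1)"
    then obtain k where k: "k \<in> nodes (itf r1)" "x = g1v k" by auto
    have "x \<in> nodes G - g1v ` (nodes (lhs r1) - nodes (itf r1))" using match_itf_nodes[OF M1 ok1 k(1)] k by simp
    moreover have "x \<notin> g2v ` (nodes (lhs r2) - nodes (itf r2))" using p2(1) k KL1 by blast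
    ultimately show "x \<in> N12 G r1 g1v r2 g2v" by (simp add: N12_def)
  qed
  have b: "g2v ` nodes (itf r2) \<subseteq> N12 G r1 g1v r2 g2v"
  proof
    fix x assume "x \<in> g2v ` nodes (itf r2)"
    then obtain k where k: "k \<in> nodes (itf r2)" "x = g2v k" by auto
    have "x \<in> nodes G - g2v ` (nodes (lhs r2) - nodes (itf r2))" using match_itf_nodes[OF M2 ok2 k(1)] k by simp
    moreover have "x \<notin> g1v ` (nodes (lhs r1) - nodes (itf r1))" using p1(1) k KL2 by blast
    ultimately show "x \<in> N12 G r1 g1v r2 g2v" by (simp add: N12_def)
  qed
  have c: "src G x \<in> N12 G r1 g1v r2 g2v \<and> tgt G x \<in> N12 G r1 g1v r2 g2v" if x: "x \<in> E12 G r1 g1e r2 g2e" for x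
  proof -
    have x1: "x \<in> edges G - g1e ` (edges (lhs r1) - edges (itf r1))"
      and x2: "x \<in> edges G - g2e ` (edges (lhs r2) - edges (itf r2))" using x by (auto simp: E12_def)
    note q1 = deleted_endpoints[OF M1 ok1 wG x1] and q2 = deleted_endpoints[OF M2 ok2 wG x2]
    show ?thesis unfolding N12_def using q1 q2 by simp
  qed
  show ?thesis unfolding side_def using a b c ok1 ok2 by blast
qed


lemma lcr_half:
  assumes gt: "gt_system Rs" and d1: "direct_der Rs G r1 g1v g1e H1 t1"
    and M2: "is_match r2 G g2v g2e" and r2: "r2 \<in> Rs" and PI: "par_indep r1 g1v g1e r2 g2v g2e"
  shows "\<exists>M1 s C \<psi>v \<psi>e dl l1 l2 de u1 u2. ders Rs H1 M1 s \<and> iso C M1 \<psi>v \<psi>e \<and> wf_graph C \<and>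
           desc G r1 g1v g1e r2 g2v g2e C dl l1 l2 de u1 u2"
proof -
  let ?L1 = "lhs r1" and ?K1 = "itf r1" and ?R1 = "rhs r1"
  let ?L2 = "lhs r2" and ?K2 = "itf r2" and ?R2 = "rhs r2"
  obtain A hv1 he1 \<phi>v \<phi>e where a: "r1 \<in> Rs" "wf_graph G" "wf_graph H1" "is_match r1 G g1v g1e"
    "wf_graph A" "subgraph (deleted G r1 g1v g1e) A"
    "morph ?R1 A hv1 he1" "inj_on hv1 (nodes ?R1)" "inj_on he1 (edges ?R1)"
    "\<forall>v\<in>nodes ?K1. hv1 v = g1v v" "\<forall>e\<in>edges ?K1. he1 e = g1e e"
    "nodes A = nodes (deleted G r1 g1v g1e) \<union> hv1 ` (nodes ?R1 - nodes ?K1)"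
    "nodes (deleted G r1 g1v g1e) \<inter> hv1 ` (nodes ?R1 - nodes ?K1) = {}"
    "edges A = edges (deleted G r1 g1v g1e) \<union> he1 ` (edges ?R1 - edges ?K1)"
    "edges (deleted G r1 g1v g1e) \<inter> he1 ` (edges ?R1 - edges ?K1) = {}"
    "iso A H1 \<phi>v \<phi>e"
    "t1 = (\<lambda>v. if v \<in> nodes (deleted G r1 g1v g1e) then Some (\<phi>v v) else None)"
    by (rule direct_derE[OF d1])
  have ok1: "rule_ok r1" and ok2: "rule_ok r2" using gt a(1) r2 gt_system_rule_ok by auto
  have wR1: "wf_graph ?R1" and wR2: "wf_graph ?R2" using ok1 ok2 by (auto simp: rule_ok_def)
  define Del1 where "Del1 = deleted G r1 g1v g1e"
  have Del1s: "nodes Del1 = nodes G - g1v ` (nodes ?L1 - nodes ?K1)" "edges Del1 = edges G - g1e ` (edges ?L1 - edges ?K1)"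
    "src Del1 = src G" "tgt Del1 = tgt G" "nlab Del1 = nlab G" "elab Del1 = elab G" by (simp_all add: Del1_def)
  note pn = pi_nodes[OF PI a(4) M2 ok1 ok2, folded Del1s(1,2)]
  note sA = subgraphD[OF a(6)[folded Del1_def]]
  note phi = isoD[OF a(16)]
  have mA: "\<And>z. z \<in> nodes ?R1 \<Longrightarrow> hv1 z \<in> nodes A \<and> nlab A (hv1 z) = nlab ?R1 z"
    "\<And>z. z \<in> edges ?R1 \<Longrightarrow> he1 z \<in> edges A \<and> src A (he1 z) = hv1 (src ?R1 z) \<and>
        tgt A (he1 z) = hv1 (tgt ?R1 z) \<and> elab A (he1 z) = elab ?R1 z"
    using a(7) by (auto simp: morph_def)
  have mphi: "\<And>x. x \<in> nodes A \<Longrightarrow> \<phi>v x \<in> nodes H1 \<and> nlab H1 (\<phi>v x) = nlab A x"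
    "\<And>x. x \<in> edges A \<Longrightarrow> \<phi>e x \<in> edges H1 \<and> src H1 (\<phi>e x) = \<phi>v (src A x) \<and>
        tgt H1 (\<phi>e x) = \<phi>v (tgt A x) \<and> elab H1 (\<phi>e x) = elab A x"
    using phi(1) by (auto simp: morph_def)
  have nA: "nodes A = nodes Del1 \<union> hv1 ` (nodes ?R1 - nodes ?K1)" using a(12) by (simp add: Del1_def)
  have eA: "edges A = edges Del1 \<union> he1 ` (edges ?R1 - edges ?K1)" using a(14) by (simp add: Del1_def)
  have djA: "nodes Del1 \<inter> hv1 ` (nodes ?R1 - nodes ?K1) = {}" "edges Del1 \<inter> he1 ` (edges ?R1 - edges ?K1) = {}"
    using a(13,15) by (simp_all add: Del1_def)
  define m2v where "m2v = \<phi>v \<circ> g2v"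
  define m2e where "m2e = \<phi>e \<circ> g2e"
  have mg2: "morph ?L2 G g2v g2e" using M2 by (simp add: is_match_def)
  have g2A: "g2v ` nodes ?L2 \<subseteq> nodes A" "g2e ` edges ?L2 \<subseteq> edges A" using pn nA eA by auto
  have morphL2A: "morph ?L2 A g2v g2e"
    using mg2 pn sA(3-6) Del1s(3-6) g2A unfolding morph_def by (auto simp: subset_eq)
  have Mh: "is_match r2 H1 m2v m2e"
  proof -
    have mo: "morph ?L2 H1 m2v m2e" unfolding m2v_def m2e_def by (rule morph_comp[OF morphL2A phi(1)])
    have i1: "inj_on m2v (nodes ?L2)" unfolding m2v_def by (rule inj_on_comp3[OF matchD(2)[OF M2] g2A(1) phi(4)])
    have i2: "inj_on m2e (edges ?L2)" unfolding m2e_def by (rule inj_on_comp3[OF matchD(3)[OF M2] g2A(2) phi(5)])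
    have dang: "src H1 y \<notin> m2v ` (nodes ?L2 - nodes ?K2) \<and> tgt H1 y \<notin> m2v ` (nodes ?L2 - nodes ?K2)"
      if y: "y \<in> edges H1 - m2e ` edges ?L2" for y
    proof -
      obtain x where x: "x \<in> edges A" "y = \<phi>e x" using y phi(7) by auto
      have xn: "x \<notin> g2e ` edges ?L2" using x y by (auto simp: m2e_def)
      have key: "w \<notin> g2v ` (nodes ?L2 - nodes ?K2)" if w: "w = src A x \<or> w = tgt A x" for w
      proof (cases "x \<in> edges Del1")
        case True
        then have "w = src G x \<or> w = tgt G x" using w sA(4,5) Del1s by auto
        moreover have "x \<in> edges G" using True Del1s by auto
        ultimately show ?thesis using matchD(4,5)[OF M2 _ xn] by (metis DiffD1 imageI)
      next
        case False
        then obtain z where z: "z \<in> edges ?R1 - edges ?K1" "x = he1 z" using x eA by auto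
        then have wz: "w = hv1 (src ?R1 z) \<or> w = hv1 (tgt ?R1 z)" using w mA(2) by auto
        show ?thesis
        proof
          assume wi: "w \<in> g2v ` (nodes ?L2 - nodes ?K2)"
          then have wD: "w \<in> nodes Del1" using pn(1) by auto
          obtain q where q: "q = src ?R1 z \<or> q = tgt ?R1 z" "w = hv1 q" using wz by auto
          have qR: "q \<in> nodes ?R1" using q(1) z wR1 by (auto simp: wf_graph_def)
          show False
          proof (cases "q \<in> nodes ?K1")
            case True
            then have "w = g1v q" using q a(10) by auto
            then have "w \<in> g1v ` nodes ?L1 \<inter> g2v ` nodes ?L2" using wi True subgraphD(1) ok1
              by (auto simp: rule_ok_def)
            then have "w \<in> g2v ` nodes ?K2" using PI by (auto simp: par_indep_def)
            then show False using wi matchD(2)[OF M2] ok2 subgraphD(1)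
              by (auto simp: rule_ok_def inj_on_def)
          next
            case False
            then show False using djA(1) wD q qR by auto
          qed
        qed
      qed
      have sx: "src A x \<in> nodes A" "tgt A x \<in> nodes A" using x a(5) by (auto simp: wf_graph_def)
      have "src H1 y = \<phi>v (src A x)" "tgt H1 y = \<phi>v (tgt A x)" using mphi(2)[OF x(1)] x(2) by auto
      moreover have "\<phi>v w \<notin> m2v ` (nodes ?L2 - nodes ?K2)" if "w \<in> nodes A" "w \<notin> g2v ` (nodes ?L2 - nodes ?K2)" for w
        using that phi(4) g2A(1) by (auto simp: m2v_def dest: inj_onD)
      ultimately show ?thesis using key sx by auto
    qed
    show ?thesis unfolding is_match_def using mo i1 i2 dang by blast
  qed
  obtain M1 s where d: "direct_der Rs H1 r2 m2v m2e M1 s"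
    using exists_der[OF r2 ok2 a(3) Mh] by blast
  obtain C hvC heC \<psi>v \<psi>e where c: "wf_graph M1"
    "wf_graph C" "subgraph (deleted H1 r2 m2v m2e) C"
    "morph ?R2 C hvC heC" "inj_on hvC (nodes ?R2)" "inj_on heC (edges ?R2)"
    "\<forall>v\<in>nodes ?K2. hvC v = m2v v" "\<forall>e\<in>edges ?K2. heC e = m2e e"
    "nodes C = nodes (deleted H1 r2 m2v m2e) \<union> hvC ` (nodes ?R2 - nodes ?K2)"
    "nodes (deleted H1 r2 m2v m2e) \<inter> hvC ` (nodes ?R2 - nodes ?K2) = {}"
    "edges C = edges (deleted H1 r2 m2v m2e) \<union> heC ` (edges ?R2 - edges ?K2)"
    "edges (deleted H1 r2 m2v m2e) \<inter> heC ` (edges ?R2 - edges ?K2) = {}"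
    "iso C M1 \<psi>v \<psi>e"
    by (rule direct_derE[OF d]) blast
  have ders: "ders Rs H1 M1 ((\<lambda>v. if v \<in> nodes M1 then Some (id v) else None) \<circ>\<^sub>m s)"
    by (rule ders.step[OF d ders.refl[OF c(1) iso_refl]])
  define N where "N = N12 G r1 g1v r2 g2v"
  define E where "E = E12 G r1 g1e r2 g2e"
  define V1 where "V1 = nodes ?R1 - nodes ?K1"
  define V2 where "V2 = nodes ?R2 - nodes ?K2"
  define F1 where "F1 = edges ?R1 - edges ?K1"
  define F2 where "F2 = edges ?R2 - edges ?K2"
  define DH where "DH = deleted H1 r2 m2v m2e"
  define S2 where "S2 = g2v ` (nodes ?L2 - nodes ?K2)"
  define T2 where "T2 = g2e ` (edges ?L2 - edges ?K2)"
  have S2D: "S2 \<subseteq> nodes Del1" "T2 \<subseteq> edges Del1" using pn by (auto simp: S2_def T2_def)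
  have ND: "N = nodes Del1 - S2" "E = edges Del1 - T2"
    by (auto simp: N_def E_def N12_def E12_def Del1s S2_def T2_def)
  have AS: "nodes A - S2 = N \<union> hv1 ` V1" "edges A - T2 = E \<union> he1 ` F1"
    using nA eA djA S2D ND by (auto simp: V1_def F1_def)
  have DHs: "src DH = src H1" "tgt DH = tgt H1" "nlab DH = nlab H1" "elab DH = elab H1" by (simp_all add: DH_def)
  have nDH: "nodes DH = \<phi>v ` N \<union> \<phi>v ` hv1 ` V1"
  proof -
    have "nodes DH = \<phi>v ` nodes A - \<phi>v ` S2" using phi(6) by (simp add: DH_def m2v_def S2_def image_comp)
    also have "\<dots> = \<phi>v ` (nodes A - S2)"
      using inj_on_image_set_diff[OF phi(4), where A="nodes A" and B=S2] S2D nA by auto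
    finally show ?thesis using AS by (simp add: image_Un)
  qed
  have eDH: "edges DH = \<phi>e ` E \<union> \<phi>e ` he1 ` F1"
  proof -
    have "edges DH = \<phi>e ` edges A - \<phi>e ` T2" using phi(7) by (simp add: DH_def m2e_def T2_def image_comp)
    also have "\<dots> = \<phi>e ` (edges A - T2)"
      using inj_on_image_set_diff[OF phi(5), where A="edges A" and B=T2] S2D eA by auto
    finally show ?thesis using AS by (simp add: image_Un)
  qed
  have NA: "N \<subseteq> nodes A" "hv1 ` V1 \<subseteq> nodes A" "E \<subseteq> edges A" "he1 ` F1 \<subseteq> edges A"
    using ND nA eA by (auto simp: V1_def F1_def)
  have NV: "N \<inter> hv1 ` V1 = {}" "E \<inter> he1 ` F1 = {}" using ND djA by (auto simp: V1_def F1_def)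
  note sC = subgraphD[OF c(3)[folded DH_def]]
  have nC: "nodes C = \<phi>v ` N \<union> (\<phi>v \<circ> hv1) ` V1 \<union> hvC ` V2"
    using c(9) nDH by (simp add: DH_def V2_def image_comp)
  have eC: "edges C = \<phi>e ` E \<union> (\<phi>e \<circ> he1) ` F1 \<union> heC ` F2"
    using c(11) eDH by (simp add: DH_def F2_def image_comp)
  have dC: "nodes DH \<inter> hvC ` V2 = {}" "edges DH \<inter> heC ` F2 = {}" using c(10,12) by (simp_all add: DH_def V2_def F2_def)
  have dj1: "\<phi>v ` N \<inter> (\<phi>v \<circ> hv1) ` V1 = {}"
    using inj_on_image_Int[OF phi(4) NA(1,2)] NV(1) by (simp add: image_comp)
  have dj2: "\<phi>v ` N \<inter> hvC ` V2 = {}" "(\<phi>v \<circ> hv1) ` V1 \<inter> hvC ` V2 = {}"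
    using dC(1) nDH by (auto simp: image_comp)
  have dj3: "\<phi>e ` E \<inter> (\<phi>e \<circ> he1) ` F1 = {}"
    using inj_on_image_Int[OF phi(5) NA(3,4)] NV(2) by (simp add: image_comp)
  have dj4: "\<phi>e ` E \<inter> heC ` F2 = {}" "(\<phi>e \<circ> he1) ` F1 \<inter> heC ` F2 = {}"
    using dC(2) eDH by (auto simp: image_comp)
  have i1: "inj_on \<phi>v N" "inj_on \<phi>e E" using phi(4,5) NA(1,3) inj_on_subset by blast+
  have i2: "inj_on (\<phi>v \<circ> hv1) V1"
    by (rule inj_on_comp3[OF inj_on_subset[OF a(8)] NA(2) phi(4)]) (auto simp: V1_def)
  have i3: "inj_on (\<phi>e \<circ> he1) F1"
    by (rule inj_on_comp3[OF inj_on_subset[OF a(9)] NA(4) phi(5)]) (auto simp: F1_def)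
  have i4: "inj_on hvC V2" "inj_on heC F2" unfolding V2_def F2_def
    by (rule inj_on_subset[OF c(5)], blast, rule inj_on_subset[OF c(6)], blast)
  have cons1: "\<forall>z\<in>nodes ?K1. (\<phi>v \<circ> hv1) z = \<phi>v (g1v z)" using a(10) by simp
  have cons2: "\<forall>z\<in>nodes ?K2. hvC z = \<phi>v (g2v z)" using c(7) by (simp add: m2v_def)
  have ND1: "N \<subseteq> nodes Del1" "E \<subseteq> edges Del1" using ND by auto
  have lab1: "\<forall>x\<in>N. nlab C (\<phi>v x) = nlab G x"
  proof
    fix x assume x: "x \<in> N"
    then have "\<phi>v x \<in> nodes DH" using nDH by auto
    then have "nlab C (\<phi>v x) = nlab H1 (\<phi>v x)" using sC(3) DHs by simp
    also have "\<dots> = nlab A x" using mphi(1) NA(1) x by auto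
    also have "\<dots> = nlab G x" using sA(3) ND1 x Del1s by auto
    finally show "nlab C (\<phi>v x) = nlab G x" .
  qed
  have lab2: "\<forall>z\<in>V1. nlab C ((\<phi>v \<circ> hv1) z) = nlab ?R1 z"
  proof
    fix z assume z: "z \<in> V1"
    then have "\<phi>v (hv1 z) \<in> nodes DH" using nDH by auto
    then have "nlab C (\<phi>v (hv1 z)) = nlab H1 (\<phi>v (hv1 z))" using sC(3) DHs by simp
    also have "\<dots> = nlab A (hv1 z)" using mphi(1) NA(2) z by auto
    also have "\<dots> = nlab ?R1 z" using mA(1) z by (auto simp: V1_def)
    finally show "nlab C ((\<phi>v \<circ> hv1) z) = nlab ?R1 z" by simp
  qed
  have lab3: "\<forall>z\<in>V2. nlab C (hvC z) = nlab ?R2 z" using c(4) by (auto simp: morph_def V2_def)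
  have ed1: "\<forall>x\<in>E. src C (\<phi>e x) = \<phi>v (src G x) \<and> tgt C (\<phi>e x) = \<phi>v (tgt G x) \<and> elab C (\<phi>e x) = elab G x"
  proof
    fix x assume x: "x \<in> E"
    then have "\<phi>e x \<in> edges DH" using eDH by auto
    then have "src C (\<phi>e x) = src H1 (\<phi>e x)" "tgt C (\<phi>e x) = tgt H1 (\<phi>e x)" "elab C (\<phi>e x) = elab H1 (\<phi>e x)"
      using sC(4-6) DHs by simp_all
    moreover have "src H1 (\<phi>e x) = \<phi>v (src A x)" "tgt H1 (\<phi>e x) = \<phi>v (tgt A x)" "elab H1 (\<phi>e x) = elab A x"
      using mphi(2) NA(3) x by auto
    moreover have "src A x = src G x" "tgt A x = tgt G x" "elab A x = elab G x"
      using sA(4-6) ND1 x Del1s by auto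
    ultimately show "src C (\<phi>e x) = \<phi>v (src G x) \<and> tgt C (\<phi>e x) = \<phi>v (tgt G x) \<and> elab C (\<phi>e x) = elab G x"
      by simp
  qed
  have ed2: "\<forall>z\<in>F1. src C ((\<phi>e \<circ> he1) z) = (\<phi>v \<circ> hv1) (src ?R1 z) \<and> tgt C ((\<phi>e \<circ> he1) z) = (\<phi>v \<circ> hv1) (tgt ?R1 z)
      \<and> elab C ((\<phi>e \<circ> he1) z) = elab ?R1 z"
  proof
    fix z assume z: "z \<in> F1"
    then have "\<phi>e (he1 z) \<in> edges DH" using eDH by auto
    then have "src C (\<phi>e (he1 z)) = src H1 (\<phi>e (he1 z))" "tgt C (\<phi>e (he1 z)) = tgt H1 (\<phi>e (he1 z))"
      "elab C (\<phi>e (he1 z)) = elab H1 (\<phi>e (he1 z))"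
      using sC(4-6) DHs by simp_all
    moreover have "src H1 (\<phi>e (he1 z)) = \<phi>v (src A (he1 z))" "tgt H1 (\<phi>e (he1 z)) = \<phi>v (tgt A (he1 z))"
      "elab H1 (\<phi>e (he1 z)) = elab A (he1 z)"
      using mphi(2) NA(4) z by auto
    moreover have "src A (he1 z) = hv1 (src ?R1 z)" "tgt A (he1 z) = hv1 (tgt ?R1 z)" "elab A (he1 z) = elab ?R1 z"
      using mA(2) z by (auto simp: F1_def)
    ultimately show "src C ((\<phi>e \<circ> he1) z) = (\<phi>v \<circ> hv1) (src ?R1 z) \<and> tgt C ((\<phi>e \<circ> he1) z) = (\<phi>v \<circ> hv1) (tgt ?R1 z)
      \<and> elab C ((\<phi>e \<circ> he1) z) = elab ?R1 z" by simp
  qed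
  have ed3: "\<forall>z\<in>F2. src C (heC z) = hvC (src ?R2 z) \<and> tgt C (heC z) = hvC (tgt ?R2 z) \<and> elab C (heC z) = elab ?R2 z"
    using c(4) by (auto simp: morph_def F2_def)
  have des: "desc G r1 g1v g1e r2 g2v g2e C \<phi>v (\<phi>v \<circ> hv1) hvC \<phi>e (\<phi>e \<circ> he1) heC"
    unfolding desc_def Let_def
    using i1 i2 i3 i4 nC eC dj1 dj2 dj3 dj4 cons1 cons2 lab1 lab2 lab3 ed1 ed2 ed3
    unfolding N_def[symmetric] E_def[symmetric] V1_def[symmetric] V2_def[symmetric] F1_def[symmetric] F2_def[symmetric]
    by blast
  show ?thesis using ders c(2,13) des by blast
qed



lemma lcr:
  assumes gt: "gt_system Rs" and d1: "direct_der Rs G r1 g1v g1e H1 t1" and d2: "direct_der Rs G r2 g2v g2e H2 t2"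
    and PI: "par_indep r1 g1v g1e r2 g2v g2e"
  shows "joinable Rs H1 H2"
proof -
  obtain A1 a1 b1 c1 e1 where x1: "r1 \<in> Rs" "wf_graph G" "is_match r1 G g1v g1e"
    using direct_derE[OF d1] by metis
  obtain A2 a2 b2 c2 e2 where x2: "r2 \<in> Rs" "is_match r2 G g2v g2e"
    using direct_derE[OF d2] by metis
  have ok1: "rule_ok r1" and ok2: "rule_ok r2" using gt x1(1) x2(1) gt_system_rule_ok by auto
  have S: "side G r1 g1v g1e r2 g2v g2e" by (rule pi_side[OF PI x1(3) x2(2) ok1 ok2 x1(2)])
  obtain M1 s C \<psi>v \<psi>e dl l1 l2 de u1 u2 where h1: "ders Rs H1 M1 s" "iso C M1 \<psi>v \<psi>e" "wf_graph C"
    "desc G r1 g1v g1e r2 g2v g2e C dl l1 l2 de u1 u2"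
    using lcr_half[OF gt d1 x2(2) x2(1) PI] by blast
  obtain M2 s' C' \<psi>v' \<psi>e' dl' l1' l2' de' u1' u2' where h2: "ders Rs H2 M2 s'" "iso C' M2 \<psi>v' \<psi>e'" "wf_graph C'"
    "desc G r2 g2v g2e r1 g1v g1e C' dl' l1' l2' de' u1' u2'"
    using lcr_half[OF gt d2 x1(3) x1(1) PI[THEN par_indep_sym[THEN iffD1]]] by blast
  obtain f g where fg: "iso C C' f g" using desc_iso[OF h1(4) desc_sym[OF h2(4)] S] by blast
  have "iso M1 M2 (\<psi>v' \<circ> (f \<circ> inv_into (nodes C) \<psi>v)) (\<psi>e' \<circ> (g \<circ> inv_into (edges C) \<psi>e))"
    by (rule iso_comp[OF iso_comp[OF iso_inv[OF h1(2) h1(3)] fg] h2(2)])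
  then obtain s'' where "ders Rs H1 M2 s''" using ders_iso_target[OF h1(1)] by blast
  then show ?thesis using h2(1) by (auto simp: joinable_def)
qed

theorem theorem5p2:
  fixes Rs :: "('a::finite, 'b::finite) gt_rule set"
    and D :: "('a, 'b) graph set set"
  assumes "gt_system Rs"
    and "D \<subseteq> graph_classes"
    and "\<And>G r1 g1v g1e H1 t1 r2 g2v g2e H2 t2.
           critical_pair Rs G r1 g1v g1e H1 t1 r2 g2v g2e H2 t2 \<Longrightarrow>
           cls G \<in> subgraph_closure D \<Longrightarrow>
           strongly_joinable Rs G H1 t1 H2 t2"
  shows "locally_confluent_on Rs D"
  unfolding locally_confluent_on_def
proof (intro allI impI)
  fix G r1 g1v g1e H1 t1 r2 g2v g2e H2 t2
  assume wG: "wf_graph G" and GD: "cls G \<in> D"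
    and d1: "direct_der Rs G r1 g1v g1e H1 t1" and d2: "direct_der Rs G r2 g2v g2e H2 t2"
  show "joinable Rs H1 H2"
  proof (cases "par_indep r1 g1v g1e r2 g2v g2e")
    case True
    then show ?thesis using lcr[OF assms(1) d1 d2] by blast
  next
    case npi: False
    show ?thesis
    proof (cases "r1 = r2 \<and> (\<forall>v\<in>nodes (lhs r1). g1v v = g2v v) \<and> (\<forall>e\<in>edges (lhs r1). g1e e = g2e e)")
      case True
      then show ?thesis using same_match_case[OF assms(1) d1] d2 by blast
    next
      case False
      then have neq: "r1 = r2 \<longrightarrow> \<not> ((\<forall>v\<in>nodes (lhs r1). g1v v = g2v v) \<and> (\<forall>e\<in>edges (lhs r1). g1e e = g2e e))"
        by blast
      show ?thesis using assms(3) by (rule critical_case[OF assms(1) _ GD d1 d2 npi neq])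
    qed
  qed
qed


end
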